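(* Let $a_1,\ldots,a_\ell\colon\mathbb{N}\to\mathbb{Z}$ be sequences, $(X,\mathcal{X},\mu,T_1,\ldots,T_\ell)$ a system, $\delta>0$, and $f_1,\ldots,f_\ell\in L^\infty(\mu)$ 1-bounded functions with $$\limsup_{N\to\infty}\Big\|\frac1N\sum_{n=1}^N T_1^{a_1(n)}f_1\cdots T_\ell^{a_\ell(n)}f_\ell\Big\|_{L^2(\mu)}\ge\delta.$$ Let $m\in[\ell]$ and suppose $f_m$ is $\mathcal{A}$-measurable for some sub-$\sigma$-algebra $\mathcal{A}\subseteq\mathcal{X}$. Then there exist $N_k\to\infty$ and $g_k\in L^\infty(\mu)$ with $\|g_k\|_{L^\infty(\mu)}\le1$, $k\in\mathbb{N}$, such that the weak limit $$\tilde f_m:=\lim_{k\to\infty}\frac{1}{N_k}\sum_{n=1}^{N_k}T_m^{-a_m(n)}g_k\cdot\prod_{j\in[\ell],\,j\neq m}T_m^{-a_m(n)}T_j^{a_j(n)}\overline{f_j}$$ exists in $L^2(\mu)$ and $$\limsup_{k\to\infty}\Big\|\frac{1}{N_k}\sum_{n=1}^{N_k}T_m^{a_m(n)}\mathbb{E}(\tilde f_m|\mathcal{A})\cdot\prod_{j\in[\ell],\,j\neq m}T_j^{a_j(n)}f_j\Big\|_{L^2(\mu)}\ge\delta^4.$$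
   Context: A system: Lebesgue probability space with invertible pairwise commuting measure-preserving $T_1,\ldots,T_\ell$. A function is 1-bounded if its absolute value is at most 1 a.e. $[\ell]=\{1,\ldots,\ell\}$. *)

theory Defs
  imports "HOL-Probability.Probability"
begin

definition tpow :: "('a \<Rightarrow> 'a) \<Rightarrow> int \<Rightarrow> 'a \<Rightarrow> 'a" where
  "tpow S k = (if 0 \<le> k then S ^^ nat k else (inv S) ^^ nat (- k))"

definition mpt :: "'a measure \<Rightarrow> ('a \<Rightarrow> 'a) \<Rightarrow> bool" where
  "mpt M S \<longleftrightarrow> S \<in> measurable M M \<and> distr M M S = M"

definition mps_system :: "'a measure \<Rightarrow> nat \<Rightarrow> (nat \<Rightarrow> 'a \<Rightarrow> 'a) \<Rightarrow> bool" where
  "mps_system M l T \<longleftrightarrow> prob_space M \<and>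
     (\<forall>i\<in>{1..l}. bij (T i) \<and> mpt M (T i) \<and> mpt M (inv (T i))) \<and>
     (\<forall>i\<in>{1..l}. \<forall>j\<in>{1..l}. T i \<circ> T j = T j \<circ> T i)"

definition one_bounded :: "'a measure \<Rightarrow> ('a \<Rightarrow> complex) \<Rightarrow> bool" where
  "one_bounded M f \<longleftrightarrow> f \<in> borel_measurable M \<and> (AE x in M. cmod (f x) \<le> 1)"

definition L2norm :: "'a measure \<Rightarrow> ('a \<Rightarrow> complex) \<Rightarrow> real" where
  "L2norm M f = sqrt (LINT x|M. (cmod (f x))\<^sup>2)"

definition in_L2 :: "'a measure \<Rightarrow> ('a \<Rightarrow> complex) \<Rightarrow> bool" where
  "in_L2 M f \<longleftrightarrow> f \<in> borel_measurable M \<and> integrable M (\<lambda>x. (cmod (f x))\<^sup>2)"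

definition weak_L2_limit :: "'a measure \<Rightarrow> (nat \<Rightarrow> 'a \<Rightarrow> complex) \<Rightarrow> ('a \<Rightarrow> complex) \<Rightarrow> bool" where
  "weak_L2_limit M F g \<longleftrightarrow> in_L2 M g \<and>
     (\<forall>h. in_L2 M h \<longrightarrow>
        (\<lambda>k. LINT x|M. F k x * cnj (h x)) \<longlonglongrightarrow> (LINT x|M. g x * cnj (h x)))"

definition cond_exp_c :: "'a measure \<Rightarrow> 'a measure \<Rightarrow> ('a \<Rightarrow> complex) \<Rightarrow> 'a \<Rightarrow> complex" where
  "cond_exp_c M A f = (\<lambda>x. complex_of_real (real_cond_exp M A (\<lambda>y. Re (f y)) x)
                          + \<i> * complex_of_real (real_cond_exp M A (\<lambda>y. Im (f y)) x))"

definition avg :: "nat \<Rightarrow> (nat \<Rightarrow> 'a \<Rightarrow> complex) \<Rightarrow> 'a \<Rightarrow> complex" where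
  "avg N F = (\<lambda>x. (\<Sum>n=1..N. F n x) / of_nat N)"

end

theory Submission
  imports Defs "HOL-Library.Diagonal_Subsequence"
begin
lemma diagonal_conv:
  fixes x :: "nat \<Rightarrow> nat \<Rightarrow> real"
  assumes bdd: "\<And>i k. \<bar>x i k\<bar> \<le> C"
  shows "\<exists>d. strict_mono d \<and> (\<forall>i. convergent (\<lambda>k. x i (d k)))"
proof -
  let ?P = "\<lambda>n. \<lambda>s. convergent (\<lambda>k. x n (s k))"
  interpret nat: subseqs ?P
  proof (unfold convergent_def, unfold subseqs_def, auto)
    fix n :: nat and s :: "nat \<Rightarrow> nat" assume s: "strict_mono s"
    have "bounded {-C..C}"
      using bounded_closed_interval by auto
    moreover have "\<And>k. x n (s k) \<in> {-C..C}"
      using bdd by (simp add: abs_le_iff minus_le_iff)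
    ultimately have "\<exists>l s'. strict_mono s' \<and> ((\<lambda>k. x n (s k)) \<circ> s') \<longlonglongrightarrow> l"
      using compact_Icc compact_imp_seq_compact seq_compactE by metis
    thus "\<exists>s'. strict_mono (s'::nat\<Rightarrow>nat) \<and> (\<exists>l. (\<lambda>k. x n (s (s' k))) \<longlonglongrightarrow> l)"
      by (auto simp: comp_def)
  qed
  define d where "d = nat.diagseq"
  have subseq: "strict_mono d"
    unfolding d_def using nat.subseq_diagseq by auto
  have rat_cnv: "?P n d" for n
  proof -
    have Pn_seqseq: "?P n (nat.seqseq (Suc n))"
      by (rule nat.seqseq_holds)
    have 1: "(\<lambda>k. x n ((nat.seqseq (Suc n) \<circ> (\<lambda>k. nat.fold_reduce (Suc n) k
      (Suc n + k))) k)) = (\<lambda>k. x n (nat.seqseq (Suc n) k)) \<circ>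
      (\<lambda>k. nat.fold_reduce (Suc n) k (Suc n + k))"
      by auto
    have 2: "?P n (d \<circ> ((+) (Suc n)))"
      unfolding d_def nat.diagseq_seqseq 1
      by (intro convergent_subseq_convergent Pn_seqseq nat.subseq_diagonal_rest)
    then obtain L where 3: "(\<lambda>na. x n (d (na + Suc n))) \<longlonglongrightarrow> L"
      by (auto simp: add.commute dest: convergentD)
    then have "(\<lambda>k. x n (d k)) \<longlonglongrightarrow> L"
      by (rule LIMSEQ_offset)
    then show ?thesis
      by (auto simp: convergent_def)
  qed
  show ?thesis using subseq rat_cnv by blast
qed

lemma tendsto_approx:
  fixes x :: "nat \<Rightarrow> real"
  assumes "\<And>e. e > 0 \<Longrightarrow> \<exists>y L'. y \<longlonglongrightarrow> L' \<and> \<bar>L - L'\<bar> \<le> e \<and> (\<forall>k. \<bar>x k - y k\<bar> \<le> e)"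
  shows "x \<longlonglongrightarrow> L"
proof (rule LIMSEQ_I)
  fix r :: real assume r: "r > 0"
  obtain y L' where y: "y \<longlonglongrightarrow> L'" "\<bar>L - L'\<bar> \<le> r/4" "\<forall>k. \<bar>x k - y k\<bar> \<le> r/4"
    using assms[of "r/4"] r by auto
  obtain n0 where n0: "\<forall>n\<ge>n0. norm (y n - L') < r/4" using LIMSEQ_D[OF y(1), of "r/4"] r by auto
  show "\<exists>no. \<forall>n\<ge>no. norm (x n - L) < r"
  proof (intro exI allI impI)
    fix n assume "n \<ge> n0"
    then have "\<bar>y n - L'\<bar> < r/4" using n0 by auto
    then show "norm (x n - L) < r" using y(2) y(3)[rule_format, of n] r unfolding real_norm_def by linarith
  qed
qed

lemma convergent_approx:
  fixes x :: "nat \<Rightarrow> real"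
  assumes "\<And>e. e > 0 \<Longrightarrow> \<exists>y. convergent y \<and> (\<forall>k. \<bar>x k - y k\<bar> \<le> e)"
  shows "convergent x"
proof -
  have "Cauchy x"
  proof (rule metric_CauchyI)
    fix r :: real assume r: "r > 0"
    obtain y where y: "convergent y" "\<forall>k. \<bar>x k - y k\<bar> \<le> r/4"
      using assms[of "r/4"] r by auto
    have "Cauchy y" using y(1) convergent_Cauchy by blast
    then obtain n0 where n0: "\<forall>m\<ge>n0. \<forall>n\<ge>n0. dist (y m) (y n) < r/4"
      using metric_CauchyD[of y "r/4"] r by auto
    show "\<exists>M. \<forall>m\<ge>M. \<forall>n\<ge>M. dist (x m) (x n) < r"
    proof (intro exI allI impI)
      fix m n assume "m \<ge> n0" "n \<ge> n0"
      then have "\<bar>y m - y n\<bar> < r/4" using n0 by (auto simp: dist_real_def)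
      then show "dist (x m) (x n) < r" using y(2)[rule_format, of m] y(2)[rule_format, of n] r
        unfolding dist_real_def by linarith
    qed
  qed
  then show ?thesis using Cauchy_convergent_iff by blast
qed

lemma int_bdd_mult:
  fixes v g :: "'a \<Rightarrow> real"
  assumes "integrable M g" "v \<in> borel_measurable M" "\<And>x. x \<in> space M \<Longrightarrow> \<bar>v x\<bar> \<le> 1"
  shows "integrable M (\<lambda>x. v x * g x)"
proof (rule Bochner_Integration.integrable_bound[OF assms(1)])
  show "(\<lambda>x. v x * g x) \<in> borel_measurable M" using assms by (intro borel_measurable_times) (auto dest: borel_measurable_integrable)
  show "AE x in M. norm (v x * g x) \<le> norm (g x)"
    using assms(3) by (auto simp: abs_mult intro!: AE_I2 mult_left_le_one_le)
qed

lemma diff_bound: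
  fixes v a b :: "'a \<Rightarrow> real"
  assumes "integrable M a" "integrable M b" "v \<in> borel_measurable M" "\<And>x. x \<in> space M \<Longrightarrow> \<bar>v x\<bar> \<le> 1"
  shows "\<bar>(\<integral>x. v x * a x \<partial>M) - (\<integral>x. v x * b x \<partial>M)\<bar> \<le> (\<integral>x. \<bar>a x - b x\<bar> \<partial>M)"
proof -
  have ia: "integrable M (\<lambda>x. v x * a x)" and ib: "integrable M (\<lambda>x. v x * b x)"
    using int_bdd_mult assms by blast+
  have iab: "integrable M (\<lambda>x. v x * (a x - b x))"
    using int_bdd_mult[of M "\<lambda>x. a x - b x" v] assms by auto
  have "(\<integral>x. v x * a x \<partial>M) - (\<integral>x. v x * b x \<partial>M) = (\<integral>x. v x * (a x - b x) \<partial>M)"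
    using ia ib by (simp add: right_diff_distrib)
  also have "\<bar>\<dots>\<bar> \<le> (\<integral>x. \<bar>v x * (a x - b x)\<bar> \<partial>M)" by (rule integral_abs_bound)
  also have "\<dots> \<le> (\<integral>x. \<bar>a x - b x\<bar> \<partial>M)"
  proof (rule integral_mono)
    show "integrable M (\<lambda>x. \<bar>v x * (a x - b x)\<bar>)" using iab by (rule integrable_abs)
    show "integrable M (\<lambda>x. \<bar>a x - b x\<bar>)" using assms by auto
    fix x assume "x \<in> space M"
    then show "\<bar>v x * (a x - b x)\<bar> \<le> \<bar>a x - b x\<bar>" using assms(4)
      by (simp add: abs_mult mult_left_le_one_le)
  qed
  finally show ?thesis .
qed

lemma ind_int_bound:
  fixes v :: "'a \<Rightarrow> real"
  assumes "finite_measure M" "B \<in> sets M" "v \<in> borel_measurable M" "\<And>x. \<bar>v x\<bar> \<le> 1"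
  shows "\<bar>\<integral>x. indicator B x * v x \<partial>M\<bar> \<le> measure M B"
proof -
  interpret finite_measure M by fact
  have "\<bar>\<integral>x. indicator B x * v x \<partial>M\<bar> \<le> (\<integral>x. \<bar>indicator B x * v x\<bar> \<partial>M)" by (rule integral_abs_bound)
  also have "\<dots> \<le> (\<integral>x. indicator B x \<partial>M)"
  proof (rule integral_mono)
    show "integrable M (\<lambda>x. \<bar>indicator B x * v x\<bar>)"
      using assms by (intro integrable_const_bound[where B=1]) (auto simp: abs_mult indicator_def)
    show "integrable M (indicator B :: _ \<Rightarrow> real)" using assms by (intro integrable_const_bound[where B=1]) (auto simp: indicator_def)
  qed (use assms in \<open>auto simp: abs_mult indicator_def\<close>)
  also have "\<dots> = measure M B" using assms by (simp add: Int_absorb2 sets.sets_into_space)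
  finally show ?thesis .
qed

lemma weak_compact_real_ev:
  fixes M :: "'a measure" and v :: "nat \<Rightarrow> 'a \<Rightarrow> real"
  assumes PM: "prob_space M" and vm[measurable]: "\<And>k. v k \<in> borel_measurable M"
    and vb: "\<And>k x. \<bar>v k x\<bar> \<le> 1"
  shows "\<exists>r w. strict_mono r \<and> w \<in> borel_measurable M \<and> (\<forall>x. \<bar>w x\<bar> \<le> 1) \<and>
     (\<forall>h. integrable M h \<longrightarrow> (\<lambda>k. \<integral>x. v (r k) x * h x \<partial>M) \<longlonglongrightarrow> (\<integral>x. w x * h x \<partial>M))"
proof -
  interpret prob_space M by fact
  define \<Omega> where "\<Omega> = space M"
  define G0 where "G0 = (\<lambda>(k,q). {x\<in>\<Omega>. v k x < q}) ` (UNIV \<times> \<rat>)"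
  define P where "P = (\<lambda>S. \<Omega> \<inter> \<Inter>S) ` {S. finite S \<and> S \<subseteq> G0}"
  have cG0: "countable G0" unfolding G0_def by (auto intro!: countable_image countable_SIGMA countable_rat)
  have cP: "countable P" unfolding P_def using cG0 by (auto intro!: countable_image countable_Collect_finite_subset)
  have G0sets: "G0 \<subseteq> sets M" unfolding G0_def \<Omega>_def by auto
  have Psets: "P \<subseteq> sets M"
  proof
    fix X assume "X \<in> P"
    then obtain S where S: "finite S" "S \<subseteq> G0" "X = \<Omega> \<inter> \<Inter>S" unfolding P_def by auto
    have "\<Omega> \<inter> \<Inter>S \<in> sets M" using S(1,2)
    proof (induction S rule: finite_induct)
      case empty then show ?case by (simp add: \<Omega>_def)
    next
      case (insert Y S)
      then have "Y \<in> sets M" using G0sets by auto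
      moreover have "\<Omega> \<inter> \<Inter>(insert Y S) = Y \<inter> (\<Omega> \<inter> \<Inter>S)" by auto
      ultimately show ?case using insert by auto
    qed
    then show "X \<in> sets M" using S by simp
  qed
  have POm: "\<Omega> \<in> P" unfolding P_def by (auto intro!: image_eqI[where x="{}"])
  have Ppow: "P \<subseteq> Pow \<Omega>" unfolding P_def by auto
  have Pint: "Int_stable P"
    unfolding Int_stable_def P_def
  proof (safe)
    fix S S' assume "finite S" "S \<subseteq> G0" "finite S'" "S' \<subseteq> G0"
    then show "(\<Omega> \<inter> \<Inter>S) \<inter> (\<Omega> \<inter> \<Inter>S') \<in> (\<lambda>S. \<Omega> \<inter> \<Inter>S) ` {S. finite S \<and> S \<subseteq> G0}"
      by (intro image_eqI[where x="S \<union> S'"]) auto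
  qed
  define F where "F = sigma \<Omega> P"
  have sF: "sets F = sigma_sets \<Omega> P" and spF: "space F = \<Omega>"
    unfolding F_def using Ppow by auto
  have PF: "P \<subseteq> sets F" using sF by auto
  have subalg: "subalgebra M F"
    unfolding subalgebra_def using sF spF Psets sets.sigma_sets_subset[of P M]
    by (auto simp: \<Omega>_def)
  have FM: "B \<in> sets F \<Longrightarrow> B \<in> sets M" for B using subalg by (auto simp: subalgebra_def)
  have vF[measurable]: "v k \<in> borel_measurable F" for k
    unfolding borel_measurable_iff_less
  proof
    fix a
    have eq: "{w \<in> space F. v k w < a} = (\<Union>q\<in>{q\<in>\<rat>. q < a}. {x\<in>\<Omega>. v k x < q})"
      using Rats_dense_in_real by (auto simp: spF)
    have "(\<Union>q\<in>{q\<in>\<rat>. q < a}. {x\<in>\<Omega>. v k x < q}) \<in> sets F"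
    proof (rule sets.countable_UN')
      show "countable {q\<in>\<rat>. q < a}" using countable_rat by (rule countable_subset[rotated]) auto
      show "(\<lambda>q. {x\<in>\<Omega>. v k x < q}) ` {q\<in>\<rat>. q < a} \<subseteq> sets F"
      proof
        fix X assume "X \<in> (\<lambda>q. {x\<in>\<Omega>. v k x < q}) ` {q\<in>\<rat>. q < a}"
        then obtain q where q: "q \<in> \<rat>" "X = {x\<in>\<Omega>. v k x < q}" by auto
        have "X \<in> G0" unfolding G0_def using q by auto
        then have "X \<in> P" unfolding P_def by (intro image_eqI[where x="{X}"]) (auto simp: q)
        then show "X \<in> sets F" using PF by auto
      qed
    qed
    then show "{w \<in> space F. v k w < a} \<in> sets F" using eq by simp
  qed
  define e where "e = from_nat_into P"
  have re: "range e = P" unfolding e_def using cP POm range_from_nat_into[of P] by blast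
  define I where "I B k = (\<integral>x. indicator B x * v k x \<partial>M)" for B k
  have Ibd: "B \<in> sets M \<Longrightarrow> \<bar>I B k\<bar> \<le> measure M B" for B k
    unfolding I_def by (rule ind_int_bound) (auto intro: vb finite_measure_axioms)
  have Iint: "B \<in> sets M \<Longrightarrow> integrable M (\<lambda>x. indicator B x * v k x)" for B k
    by (rule integrable_const_bound[where B=1]) (auto simp: abs_mult indicator_def vb)
  obtain d where d: "strict_mono d" "\<And>i. convergent (\<lambda>k. I (e i) (d k))"
  proof -
    have "\<bar>I (e i) k\<bar> \<le> 1" for i k
    proof -
      have "e i \<in> sets M" using re Psets by auto
      then show ?thesis using Ibd[of "e i" k] prob_le_1[of "e i"] by linarith
    qed
    then show ?thesis using diagonal_conv[of "\<lambda>i k. I (e i) k" 1] that by blast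
  qed
  have conv: "convergent (\<lambda>k. I B (d k))" if B: "B \<in> sets F" for B
  proof -
    have "B \<in> sigma_sets \<Omega> P" using B sF by simp
    with Pint Ppow show ?thesis
    proof (induct rule: sigma_sets_induct_disjoint)
      case (basic A)
      then obtain i where "A = e i" using re by auto
      then show ?case using d(2) by simp
    next
      case empty
      then show ?case by (simp add: I_def convergent_const)
    next
      case (compl A)
      have AM: "A \<in> sets M" using compl(1) sF FM by auto
      have OmM: "\<Omega> \<in> sets M" by (simp add: \<Omega>_def)
      have AOm: "A \<subseteq> \<Omega>" using AM by (simp add: \<Omega>_def sets.sets_into_space)
      have "I (\<Omega> - A) k = I \<Omega> k - I A k" for k
      proof -
        have "(\<lambda>x. indicator (\<Omega> - A) x * v k x) = (\<lambda>x. indicator \<Omega> x * v k x - indicator A x * v k x)"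
          using AOm by (auto simp: indicator_def fun_eq_iff)
        then show ?thesis unfolding I_def using Iint[OF AM] Iint[OF OmM] by simp
      qed
      moreover have "convergent (\<lambda>k. I \<Omega> (d k))"
        using d(2) re POm by (metis image_iff)
      ultimately show ?case using compl(2) by (simp add: convergent_diff)
    next
      case (union A)
      have AM: "A i \<in> sets M" for i using union(2) sF FM by auto
      define V where "V n = (\<Union>i<n. A i)" for n
      define U where "U = (\<Union>i. A i)"
      have VM: "V n \<in> sets M" for n unfolding V_def using AM by auto
      have UM: "U \<in> sets M" unfolding U_def using AM by auto
      have VU: "V n \<subseteq> U" for n unfolding V_def U_def by auto
      have convV: "convergent (\<lambda>k. I (V n) (d k))" for n
      proof (induction n)
        case 0 then show ?case by (simp add: V_def I_def convergent_const)
      next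
        case (Suc n)
        have disj: "V n \<inter> A n = {}" using union(1) unfolding V_def disjoint_family_on_def by auto (metis IntI empty_iff less_irrefl)
        have "V (Suc n) = V n \<union> A n" unfolding V_def by (auto simp: lessThan_Suc)
        then have "I (V (Suc n)) k = I (V n) k + I (A n) k" for k
        proof -
          assume eq: "V (Suc n) = V n \<union> A n"
          have "(\<lambda>x. indicator (V (Suc n)) x * v k x) = (\<lambda>x. indicator (V n) x * v k x + indicator (A n) x * v k x)"
            using disj unfolding eq by (auto simp: indicator_def fun_eq_iff)
          then show ?thesis unfolding I_def using Iint[OF VM] Iint[OF AM] by simp
        qed
        then show ?case using Suc union(3)[of n] by (simp add: convergent_add)
      qed
      have tail: "\<bar>I U k - I (V n) k\<bar> \<le> measure M (U - V n)" for k n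
      proof -
        have "(\<lambda>x. indicator (U - V n) x * v k x) = (\<lambda>x. indicator U x * v k x - indicator (V n) x * v k x)"
          using VU[of n] by (auto simp: indicator_def fun_eq_iff)
        then have "I (U - V n) k = I U k - I (V n) k" unfolding I_def using Iint[OF UM] Iint[OF VM] by simp
        then show ?thesis using Ibd[of "U - V n" k] UM VM by auto
      qed
      have incV: "incseq V" unfolding incseq_def V_def by (auto intro: less_le_trans)
      have "(\<lambda>n. measure M (V n)) \<longlonglongrightarrow> measure M (\<Union>n. V n)"
        using VM incV by (intro finite_Lim_measure_incseq) auto
      moreover have "(\<Union>n. V n) = U" unfolding V_def U_def by auto
      ultimately have "(\<lambda>n. measure M U - measure M (V n)) \<longlonglongrightarrow> measure M U - measure M U"
        by (intro tendsto_diff) auto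
      then have lim0: "(\<lambda>n. measure M (U - V n)) \<longlonglongrightarrow> 0"
        using finite_measure_Diff[OF UM VM VU] by simp
      have "convergent (\<lambda>k. I U (d k))"
      proof (rule convergent_approx)
        fix \<epsilon> :: real assume "\<epsilon> > 0"
        then obtain n where "\<bar>measure M (U - V n) - 0\<bar> < \<epsilon>" using LIMSEQ_D[OF lim0] by fastforce
        then have "measure M (U - V n) \<le> \<epsilon>" by simp
        then show "\<exists>y. convergent y \<and> (\<forall>k. \<bar>I U (d k) - y k\<bar> \<le> \<epsilon>)"
          using convV[of n] tail by (intro exI[of _ "\<lambda>k. I (V n) (d k)"]) (auto intro: order_trans)
      qed
      then show ?case by (simp add: U_def)
    qed
  qed
  define \<nu> where "\<nu> B = lim (\<lambda>k. I B (d k))" for B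
  have \<nu>lim: "(\<lambda>k. I B (d k)) \<longlonglongrightarrow> \<nu> B" if "B \<in> sets F" for B
    using conv[OF that] unfolding \<nu>_def by (simp add: convergent_LIMSEQ_iff)
  have \<nu>bd: "\<bar>\<nu> B\<bar> \<le> measure M B" if B: "B \<in> sets F" for B
  proof -
    have "(\<lambda>k. \<bar>I B (d k)\<bar>) \<longlonglongrightarrow> \<bar>\<nu> B\<bar>" using \<nu>lim[OF B] by (rule tendsto_rabs)
    then show ?thesis using Ibd[OF FM[OF B]] by (intro LIMSEQ_le_const2) auto
  qed
  have \<nu>add: "\<nu> (A \<union> B) = \<nu> A + \<nu> B" if A: "A \<in> sets F" and B: "B \<in> sets F" and AB: "A \<inter> B = {}" for A B
  proof -
    have "I (A \<union> B) k = I A k + I B k" for k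
    proof -
      have "(\<lambda>x. indicator (A \<union> B) x * v k x) = (\<lambda>x. indicator A x * v k x + indicator B x * v k x)"
        using AB by (auto simp: indicator_def fun_eq_iff)
      then show ?thesis unfolding I_def using Iint[OF FM[OF A]] Iint[OF FM[OF B]] by simp
    qed
    then have "(\<lambda>k. I (A \<union> B) (d k)) \<longlonglongrightarrow> \<nu> A + \<nu> B"
      using \<nu>lim[OF A] \<nu>lim[OF B] by (simp add: tendsto_add)
    moreover have "A \<union> B \<in> sets F" using A B by auto
    ultimately show ?thesis using \<nu>lim LIMSEQ_unique by blast
  qed
  have \<nu>0: "\<nu> {} = 0"
  proof -
    have "(\<lambda>k. I {} (d k)) \<longlonglongrightarrow> 0" by (simp add: I_def)
    then show ?thesis using \<nu>lim[of "{}"] LIMSEQ_unique by auto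
  qed
  define \<mu>' where "\<mu>' B = ennreal (\<nu> B + measure M B)" for B
  have sigF: "sigma_algebra \<Omega> (sets F)" using sF Ppow by (simp add: sigma_algebra_sigma_sets)
  interpret Fs: sigma_algebra \<Omega> "sets F" by (rule sigF)
  have pos: "positive (sets F) \<mu>'" unfolding positive_def \<mu>'_def using \<nu>0 by simp
  have ca: "countably_additive (sets F) \<mu>'"
  proof (rule Fs.empty_continuous_imp_countably_additive[OF pos])
    show "additive (sets F) \<mu>'"
      unfolding additive_def
    proof (intro ballI impI)
      fix A B assume A: "A \<in> sets F" and B: "B \<in> sets F" and AB: "A \<inter> B = {}"
      have "0 \<le> \<nu> A + measure M A" "0 \<le> \<nu> B + measure M B" using \<nu>bd[OF A] \<nu>bd[OF B] by auto
      moreover have "measure M (A \<union> B) = measure M A + measure M B"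
        using finite_measure_Union[OF FM[OF A] FM[OF B] AB] .
      ultimately show "\<mu>' (A \<union> B) = \<mu>' A + \<mu>' B"
        unfolding \<mu>'_def using \<nu>add[OF A B AB] by (simp add: ennreal_plus[symmetric] algebra_simps)
    qed
    show "\<forall>A\<in>sets F. \<mu>' A \<noteq> \<infinity>" unfolding \<mu>'_def by simp
    fix A :: "nat \<Rightarrow> 'a set" assume rA: "range A \<subseteq> sets F" and dA: "decseq A" and eA: "(\<Inter>i. A i) = {}"
    have "(\<lambda>i. measure M (A i)) \<longlonglongrightarrow> measure M (\<Inter>i. A i)"
      using rA dA FM by (intro finite_Lim_measure_decseq) auto
    then have m0: "(\<lambda>i. measure M (A i)) \<longlonglongrightarrow> 0" using eA by simp
    have "(\<lambda>i. \<nu> (A i) + measure M (A i)) \<longlonglongrightarrow> 0"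
    proof (rule tendsto_sandwich[where f="\<lambda>_. 0" and h="\<lambda>i. 2 * measure M (A i)"])
      show "\<forall>\<^sub>F i in sequentially. 0 \<le> \<nu> (A i) + measure M (A i)"
      proof (intro always_eventually allI)
        fix i have "A i \<in> sets F" using rA by auto
        then show "0 \<le> \<nu> (A i) + measure M (A i)" using \<nu>bd[of "A i"] by (auto simp: abs_le_iff)
      qed
      show "\<forall>\<^sub>F i in sequentially. \<nu> (A i) + measure M (A i) \<le> 2 * measure M (A i)"
      proof (intro always_eventually allI)
        fix i have "A i \<in> sets F" using rA by auto
        then show "\<nu> (A i) + measure M (A i) \<le> 2 * measure M (A i)" using \<nu>bd[of "A i"] by (auto simp: abs_le_iff)
      qed
      show "(\<lambda>i. 2 * measure M (A i)) \<longlonglongrightarrow> 0" using tendsto_mult_right_zero[OF m0, of 2] by simp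
    qed simp
    then have "(\<lambda>i. ennreal (\<nu> (A i) + measure M (A i))) \<longlonglongrightarrow> ennreal 0" by (rule tendsto_ennrealI)
    then show "(\<lambda>i. \<mu>' (A i)) \<longlonglongrightarrow> 0" unfolding \<mu>'_def by simp
  qed
  define N where "N = measure_of \<Omega> (sets F) \<mu>'"
  have Nmeas: "emeasure N B = \<mu>' B" if "B \<in> sets F" for B
    unfolding N_def by (rule emeasure_measure_of_sigma[OF sigF pos ca that])
  have sN: "sets N = sets F" unfolding N_def using Fs.sets_into_space Fs.sigma_sets_eq
    by (simp add: sets_measure_of)
  define M0 where "M0 = restr_to_subalg M F"
  have sM0: "sets M0 = sets F" unfolding M0_def by (rule sets_restr_to_subalg[OF subalg])
  have spM0: "space M0 = \<Omega>" unfolding M0_def by (simp add: space_restr_to_subalg \<Omega>_def)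
  interpret M0: finite_measure M0 unfolding M0_def by (rule finite_measure_restr_to_subalg[OF subalg finite_measure_axioms])
  have ac: "absolutely_continuous M0 N"
    unfolding absolutely_continuous_def
  proof
    fix B assume "B \<in> null_sets M0"
    then have B: "B \<in> null_sets M" "B \<in> sets F" using null_sets_restr_to_subalg[OF subalg] unfolding M0_def by auto
    then have "measure M B = 0" by (simp add: measure_def null_setsD1)
    then have "\<nu> B = 0" using \<nu>bd[OF B(2)] by simp
    then have "emeasure N B = 0" using Nmeas[OF B(2)] \<open>measure M B = 0\<close> by (simp add: \<mu>'_def)
    then show "B \<in> null_sets N" using B(2) sN by auto
  qed
  have sNM0: "sets N = sets M0" using sN sM0 by simp
  have "\<exists>f \<in> borel_measurable M0. density M0 f = N" by (rule M0.Radon_Nikodym[OF ac sNM0])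
  then obtain f where fM0: "f \<in> borel_measurable M0" and fN: "density M0 f = N"
    by (rule bexE)
  have fF[measurable]: "f \<in> borel_measurable F" using fM0 unfolding measurable_cong_sets[OF sM0 refl] .
  have fint: "(\<integral>\<^sup>+x. f x * indicator B x \<partial>M0) = \<mu>' B" if B: "B \<in> sets F" for B
  proof -
    have "emeasure (density M0 f) B = (\<integral>\<^sup>+x. f x * indicator B x \<partial>M0)"
      using fM0 B sM0 by (intro emeasure_density) auto
    then show ?thesis using fN Nmeas[OF B] by simp
  qed
  have OmF: "\<Omega> \<in> sets F" using PF POm by auto
  have "(\<integral>\<^sup>+x. f x \<partial>M0) = (\<integral>\<^sup>+x. f x * indicator \<Omega> x \<partial>M0)"
    by (intro nn_integral_cong) (simp add: spM0)
  then have ffin: "(\<integral>\<^sup>+x. f x \<partial>M0) \<noteq> \<infinity>" using fint[OF OmF] by (simp add: \<mu>'_def)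
  have finAE: "AE x in M0. f x \<noteq> \<infinity>" using nn_integral_PInf_AE[OF fM0 ffin] .
  define u where "u x = enn2real (f x)" for x
  have uF[measurable]: "u \<in> borel_measurable F" unfolding u_def by measurable
  have uM0[measurable]: "u \<in> borel_measurable M0" using uF unfolding measurable_cong_sets[OF sM0 refl] .
  have uM[measurable]: "u \<in> borel_measurable M" using measurable_from_subalg[OF subalg uF] .
  have unn: "0 \<le> u x" for x unfolding u_def by simp
  have uintM0: "integrable M0 u"
  proof (rule integrableI_nonneg)
    show "AE x in M0. 0 \<le> u x" using unn by simp
    have "(\<integral>\<^sup>+x. ennreal (u x) \<partial>M0) = (\<integral>\<^sup>+x. f x \<partial>M0)"
      using finAE by (intro nn_integral_cong_AE) (auto simp: u_def less_top)
    then show "(\<integral>\<^sup>+x. ennreal (u x) \<partial>M0) < \<infinity>" using ffin by (simp add: less_top)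
  qed simp
  have uint: "integrable M u" using integrable_from_subalg[OF subalg] uintM0 unfolding M0_def by blast
  have uset: "(\<integral>x. indicator B x * u x \<partial>M) = \<nu> B + measure M B" if B: "B \<in> sets F" for B
  proof -
    have [measurable]: "B \<in> sets F" by fact
    have "(\<integral>x. indicator B x * u x \<partial>M) = (\<integral>x. indicator B x * u x \<partial>M0)"
      unfolding M0_def by (rule integral_subalgebra2[OF subalg, symmetric]) measurable
    also have "\<dots> = enn2real (\<integral>\<^sup>+x. ennreal (indicator B x * u x) \<partial>M0)"
    proof (rule integral_eq_nn_integral)
      have [measurable]: "B \<in> sets M0" using sM0 B by simp
      show "(\<lambda>x. indicator B x * u x) \<in> borel_measurable M0" by measurable
      show "AE x in M0. 0 \<le> indicator B x * u x" using unn by (auto simp: indicator_def)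
    qed
    also have "(\<integral>\<^sup>+x. ennreal (indicator B x * u x) \<partial>M0) = (\<integral>\<^sup>+x. f x * indicator B x \<partial>M0)"
      using finAE by (intro nn_integral_cong_AE) (auto simp: u_def less_top indicator_def)
    also have "\<dots> = \<mu>' B" by (rule fint[OF B])
    finally show ?thesis unfolding \<mu>'_def using \<nu>bd[OF B] by simp
  qed
  define E where "E = {x\<in>\<Omega>. 2 < u x}"
  have EF: "E \<in> sets F"
  proof -
    have "{x\<in>space F. 2 < u x} \<in> sets F" by measurable
    then show ?thesis unfolding E_def spF .
  qed
  have uAE: "AE x in M. u x \<le> 2"
  proof -
    define g where "g x = indicator E x * (u x - 2)" for x
    have gint: "integrable M g" unfolding g_def using integrable_mult_indicator[OF FM[OF EF], of "\<lambda>x. u x - 2"] uint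
      by simp
    have gnn: "0 \<le> g x" for x unfolding g_def E_def by (auto simp: indicator_def)
    have "(\<integral>x. g x \<partial>M) = (\<integral>x. indicator E x * u x \<partial>M) - 2 * (\<integral>x. indicator E x \<partial>M)"
    proof -
      have "g = (\<lambda>x. indicator E x * u x - 2 * indicator E x)" unfolding g_def by (auto simp: fun_eq_iff algebra_simps)
      moreover have "integrable M (\<lambda>x. indicator E x * u x)" using integrable_mult_indicator[OF FM[OF EF] uint] by simp
      moreover have "integrable M (\<lambda>x. 2 * indicator E x :: real)"
        using FM[OF EF] by (intro integrable_mult_right integrable_real_indicator) (auto simp: less_top[symmetric])
      ultimately show ?thesis by simp
    qed
    also have "\<dots> = \<nu> E + measure M E - 2 * measure M E"
      using uset[OF EF] FM[OF EF] by (simp add: Int_absorb2 sets.sets_into_space)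
    also have "\<dots> \<le> 0" using \<nu>bd[OF EF] by simp
    finally have "(\<integral>x. g x \<partial>M) \<le> 0" .
    moreover have "0 \<le> (\<integral>x. g x \<partial>M)" using gnn by (simp add: integral_nonneg_AE)
    ultimately have "(\<integral>x. g x \<partial>M) = 0" by simp
    then have "AE x in M. g x = 0" using integral_nonneg_eq_0_iff_AE[OF gint] gnn by simp
    with AE_space show ?thesis
      by eventually_elim (auto simp: g_def E_def indicator_def \<Omega>_def split: if_splits)
  qed
  define w where "w x = max (-1) (min 1 (u x - 1))" for x
  have wF[measurable]: "w \<in> borel_measurable F" unfolding w_def by measurable
  have wM[measurable]: "w \<in> borel_measurable M" using measurable_from_subalg[OF subalg wF] .
  have wb: "\<bar>w x\<bar> \<le> 1" for x unfolding w_def by auto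
  have wAE: "AE x in M. w x = u x - 1" using uAE
  proof eventually_elim
    fix x assume "u x \<le> 2" then show "w x = u x - 1" using unn[of x] by (auto simp: w_def)
  qed
  have wset: "(\<integral>x. indicator B x * w x \<partial>M) = \<nu> B" if B: "B \<in> sets F" for B
  proof -
    have BM: "B \<in> sets M" using FM[OF B] .
    have "(\<integral>x. indicator B x * w x \<partial>M) = (\<integral>x. indicator B x * u x - indicator B x \<partial>M)"
    proof (rule integral_cong_AE)
      have [measurable]: "B \<in> sets M" by (rule BM)
      show "(\<lambda>x. indicator B x * w x) \<in> borel_measurable M" by measurable
      show "(\<lambda>x. indicator B x * u x - indicator B x) \<in> borel_measurable M" by measurable
      show "AE x in M. indicator B x * w x = indicator B x * u x - indicator B x"
        using wAE by eventually_elim (auto simp: indicator_def)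
    qed
    also have "\<dots> = (\<integral>x. indicator B x * u x \<partial>M) - (\<integral>x. indicator B x \<partial>M)"
    proof -
      have i1: "integrable M (\<lambda>x. indicator B x * u x)" using integrable_mult_indicator[OF BM uint] by simp
      have i2: "integrable M (indicator B :: _ \<Rightarrow> real)" using BM by (auto simp: less_top[symmetric])
      show ?thesis using Bochner_Integration.integral_diff[OF i1 i2] by simp
    qed
    also have "\<dots> = \<nu> B" using uset[OF B] BM by (simp add: Int_absorb2 sets.sets_into_space)
    finally show ?thesis .
  qed
  have sfm: "sigma_finite_measure (restr_to_subalg M F)" using M0.sigma_finite_measure_axioms unfolding M0_def .
  interpret S: sigma_finite_subalgebra M F by (rule sigma_finite_subalgebra.intro[OF subalg sfm])
  have intM: "integrable M g" if "integrable M0 g" for g :: "'a \<Rightarrow> real"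
    using integrable_from_subalg[OF subalg] that unfolding M0_def by blast
  have Q: "(\<lambda>k. \<integral>x. v (d k) x * g x \<partial>M) \<longlonglongrightarrow> (\<integral>x. w x * g x \<partial>M)" if g: "integrable M0 g" for g
    using g
  proof (induct rule: integrable_induct)
    case (base A c)
    have AF: "A \<in> sets F" using base(1) sM0 by simp
    have eq1: "(\<lambda>k. \<integral>x. v (d k) x * (indicator A x *\<^sub>R c) \<partial>M) = (\<lambda>k. c * I A (d k))"
    proof
      fix k
      have "(\<lambda>x. v (d k) x * (indicator A x *\<^sub>R c)) = (\<lambda>x. c * (indicator A x * v (d k) x))" by (auto simp: fun_eq_iff)
      then show "(\<integral>x. v (d k) x * (indicator A x *\<^sub>R c) \<partial>M) = c * I A (d k)" unfolding I_def by simp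
    qed
    have eq2: "(\<integral>x. w x * (indicator A x *\<^sub>R c) \<partial>M) = c * \<nu> A"
    proof -
      have "(\<lambda>x. w x * (indicator A x *\<^sub>R c)) = (\<lambda>x. c * (indicator A x * w x))" by (auto simp: fun_eq_iff)
      then show ?thesis using wset[OF AF] by simp
    qed
    show ?case unfolding eq1 eq2 using \<nu>lim[OF AF] by (rule tendsto_mult_left)
  next
    case (add f g)
    have fM: "integrable M f" and gM: "integrable M g" using add intM by auto
    have sp: "(\<integral>x. u' x * (f x + g x) \<partial>M) = (\<integral>x. u' x * f x \<partial>M) + (\<integral>x. u' x * g x \<partial>M)"
      if "u' \<in> borel_measurable M" "\<And>x. \<bar>u' x\<bar> \<le> 1" for u'
    proof -
      have "(\<lambda>x. u' x * (f x + g x)) = (\<lambda>x. u' x * f x + u' x * g x)" by (auto simp: fun_eq_iff algebra_simps)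
      moreover have "integrable M (\<lambda>x. u' x * f x)" "integrable M (\<lambda>x. u' x * g x)"
        using int_bdd_mult[OF fM that(1)] int_bdd_mult[OF gM that(1)] that(2) by auto
      ultimately show ?thesis by simp
    qed
    show ?case unfolding sp[OF vm vb] sp[OF wM wb] using add(2) add(4) by (rule tendsto_add)
  next
    case (lim g s)
    have sM: "integrable M (s i)" for i using lim(1) intM by auto
    have gM: "integrable M g" using lim(5) intM by auto
    have spM0: "space M0 = space M" using spM0 \<Omega>_def by simp
    have d0: "(\<lambda>i. \<integral>x. \<bar>g x - s i x\<bar> \<partial>M) \<longlonglongrightarrow> (\<integral>x. 0 \<partial>M)"
    proof (rule integral_dominated_convergence[where w="\<lambda>x. 3 * \<bar>g x\<bar>"])
      show "(\<lambda>x. 0::real) \<in> borel_measurable M" by simp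
      show "(\<lambda>x. \<bar>g x - s i x\<bar>) \<in> borel_measurable M" for i using sM gM by (auto intro!: borel_measurable_abs borel_measurable_diff)
      show "integrable M (\<lambda>x. 3 * \<bar>g x\<bar>)" using gM by auto
      show "AE x in M. (\<lambda>i. \<bar>g x - s i x\<bar>) \<longlonglongrightarrow> 0"
      proof (rule AE_I2)
        fix x assume "x \<in> space M"
        then have "(\<lambda>i. s i x) \<longlonglongrightarrow> g x" using lim(3) spM0 by auto
        then have "(\<lambda>i. g x - s i x) \<longlonglongrightarrow> g x - g x" by (intro tendsto_diff tendsto_const)
        then have "(\<lambda>i. \<bar>g x - s i x\<bar>) \<longlonglongrightarrow> \<bar>g x - g x\<bar>" by (rule tendsto_rabs)
        then show "(\<lambda>i. \<bar>g x - s i x\<bar>) \<longlonglongrightarrow> 0" by simp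
      qed
      show "AE x in M. norm \<bar>g x - s i x\<bar> \<le> 3 * \<bar>g x\<bar>" for i
      proof (rule AE_I2)
        fix x assume "x \<in> space M"
        then have "norm (s i x) \<le> 2 * norm (g x)" using lim(4) spM0 by auto
        then show "norm \<bar>g x - s i x\<bar> \<le> 3 * \<bar>g x\<bar>" by simp
      qed
    qed
    then have d0': "(\<lambda>i. \<integral>x. \<bar>g x - s i x\<bar> \<partial>M) \<longlonglongrightarrow> 0" by simp
    show ?case
    proof (rule tendsto_approx)
      fix \<epsilon> :: real assume "\<epsilon> > 0"
      then obtain i where "\<bar>(\<integral>x. \<bar>g x - s i x\<bar> \<partial>M) - 0\<bar> < \<epsilon>" using LIMSEQ_D[OF d0'] by fastforce
      then have ei: "(\<integral>x. \<bar>g x - s i x\<bar> \<partial>M) \<le> \<epsilon>" by simp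
      have b1: "\<bar>(\<integral>x. w x * g x \<partial>M) - (\<integral>x. w x * s i x \<partial>M)\<bar> \<le> \<epsilon>"
        using diff_bound[OF gM sM wM] wb ei by (meson order_trans)
      have b2: "\<bar>(\<integral>x. v (d k) x * g x \<partial>M) - (\<integral>x. v (d k) x * s i x \<partial>M)\<bar> \<le> \<epsilon>" for k
        using diff_bound[OF gM sM vm] vb ei by (meson order_trans)
      show "\<exists>y L'. y \<longlonglongrightarrow> L' \<and> \<bar>(\<integral>x. w x * g x \<partial>M) - L'\<bar> \<le> \<epsilon> \<and>
               (\<forall>k. \<bar>(\<integral>x. v (d k) x * g x \<partial>M) - y k\<bar> \<le> \<epsilon>)"
        using lim(2)[of i] b1 b2 by blast
    qed
  qed
  show ?thesis
  proof (intro exI conjI allI impI)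
    show "strict_mono d" by (rule d(1))
    show "w \<in> borel_measurable M" by (rule wM)
    show "\<bar>w x\<bar> \<le> 1" for x by (rule wb)
    fix h :: "'a \<Rightarrow> real" assume h: "integrable M h"
    have hm[measurable]: "h \<in> borel_measurable M" using h by auto
    have h'M0: "integrable M0 (real_cond_exp M F h)"
      unfolding M0_def by (rule integrable_in_subalg[OF subalg borel_measurable_cond_exp S.real_cond_exp_int(1)[OF h]])
    have e1: "(\<integral>x. v k x * h x \<partial>M) = (\<integral>x. v k x * real_cond_exp M F h x \<partial>M)" for k
      using int_bdd_mult[OF h vm vb] by (intro S.real_cond_exp_intg(2)[symmetric]) auto
    have e2: "(\<integral>x. w x * h x \<partial>M) = (\<integral>x. w x * real_cond_exp M F h x \<partial>M)"
      using int_bdd_mult[OF h wM wb] by (intro S.real_cond_exp_intg(2)[symmetric]) auto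
    show "(\<lambda>k. \<integral>x. v (d k) x * h x \<partial>M) \<longlonglongrightarrow> (\<integral>x. w x * h x \<partial>M)"
      unfolding e1 e2 by (rule Q[OF h'M0])
  qed
qed

lemma borel_measurable_cnj[measurable]:
  fixes f :: "'a \<Rightarrow> complex"
  assumes "f \<in> borel_measurable M"
  shows "(\<lambda>x. cnj (f x)) \<in> borel_measurable M"
  by (rule borel_measurable_continuous_on[OF _ assms]) (intro continuous_intros)

lemma int_bdd_C:
  fixes g :: "'a \<Rightarrow> 'b::{banach, second_countable_topology}" and v :: "'a \<Rightarrow> 'c::{banach, second_countable_topology}"
  assumes "integrable M g" "v \<in> borel_measurable M" "AE x in M. norm (v x) \<le> C * norm (g x)"
  shows "integrable M v"
proof (rule Bochner_Integration.integrable_bound[of M "\<lambda>x. C *\<^sub>R g x"])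
  show "integrable M (\<lambda>x. C *\<^sub>R g x)" using assms(1) by auto
  show "v \<in> borel_measurable M" by fact
  have c: "C * norm (g x) \<le> norm (C *\<^sub>R g x)" for x by (simp add: mult_right_mono)
  show "AE x in M. norm (v x) \<le> norm (C *\<^sub>R g x)" using assms(3)
  proof eventually_elim
    fix x assume "norm (v x) \<le> C * norm (g x)"
    then show "norm (v x) \<le> norm (C *\<^sub>R g x)" using c[of x] by linarith
  qed
qed

lemma split_int:
  fixes A h :: "'a \<Rightarrow> complex"
  assumes h: "integrable M h" and A[measurable]: "A \<in> borel_measurable M" and bd: "AE x in M. cmod (A x) \<le> C" and C: "0 \<le> C"
  shows "integrable M (\<lambda>x. A x * cnj (h x))"
    "Re (\<integral>x. A x * cnj (h x) \<partial>M) = (\<integral>x. Re (A x) * Re (h x) \<partial>M) + (\<integral>x. Im (A x) * Im (h x) \<partial>M)"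
    "Im (\<integral>x. A x * cnj (h x) \<partial>M) = (\<integral>x. Im (A x) * Re (h x) \<partial>M) - (\<integral>x. Re (A x) * Im (h x) \<partial>M)"
proof -
  have hm[measurable]: "h \<in> borel_measurable M" using h by auto
  show i0: "integrable M (\<lambda>x. A x * cnj (h x))"
  proof (rule int_bdd_C[OF h, where C=C])
    show "(\<lambda>x. A x * cnj (h x)) \<in> borel_measurable M" by measurable
    show "AE x in M. norm (A x * cnj (h x)) \<le> C * norm (h x)" using bd
      by eventually_elim (simp add: norm_mult mult_right_mono)
  qed
  have hR: "integrable M (\<lambda>x. Re (h x))" and hI: "integrable M (\<lambda>x. Im (h x))" using h by auto
  have cb: "AE x in M. \<bar>Re (A x)\<bar> \<le> C \<and> \<bar>Im (A x)\<bar> \<le> C" using bd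
    by eventually_elim (auto intro: order_trans[OF abs_Re_le_cmod] order_trans[OF abs_Im_le_cmod])
  have i1: "integrable M (\<lambda>x. Re (A x) * Re (h x))"
  proof (rule int_bdd_C[OF hR, where C=C])
    show "(\<lambda>x. Re (A x) * Re (h x)) \<in> borel_measurable M" by measurable
    show "AE x in M. norm (Re (A x) * Re (h x)) \<le> C * norm (Re (h x))" using cb
      by eventually_elim (auto simp: abs_mult intro: mult_right_mono)
  qed
  have i2: "integrable M (\<lambda>x. Im (A x) * Im (h x))"
  proof (rule int_bdd_C[OF hI, where C=C])
    show "(\<lambda>x. Im (A x) * Im (h x)) \<in> borel_measurable M" by measurable
    show "AE x in M. norm (Im (A x) * Im (h x)) \<le> C * norm (Im (h x))" using cb
      by eventually_elim (auto simp: abs_mult intro: mult_right_mono)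
  qed
  have i3: "integrable M (\<lambda>x. Im (A x) * Re (h x))"
  proof (rule int_bdd_C[OF hR, where C=C])
    show "(\<lambda>x. Im (A x) * Re (h x)) \<in> borel_measurable M" by measurable
    show "AE x in M. norm (Im (A x) * Re (h x)) \<le> C * norm (Re (h x))" using cb
      by eventually_elim (auto simp: abs_mult intro: mult_right_mono)
  qed
  have i4: "integrable M (\<lambda>x. Re (A x) * Im (h x))"
  proof (rule int_bdd_C[OF hI, where C=C])
    show "(\<lambda>x. Re (A x) * Im (h x)) \<in> borel_measurable M" by measurable
    show "AE x in M. norm (Re (A x) * Im (h x)) \<le> C * norm (Im (h x))" using cb
      by eventually_elim (auto simp: abs_mult intro: mult_right_mono)
  qed
  have "Re (\<integral>x. A x * cnj (h x) \<partial>M) = (\<integral>x. Re (A x * cnj (h x)) \<partial>M)"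
    by (rule integral_bounded_linear[OF bounded_linear_Re i0, symmetric])
  also have "\<dots> = (\<integral>x. Re (A x) * Re (h x) + Im (A x) * Im (h x) \<partial>M)" by simp
  also have "\<dots> = (\<integral>x. Re (A x) * Re (h x) \<partial>M) + (\<integral>x. Im (A x) * Im (h x) \<partial>M)"
    using i1 i2 by simp
  finally show "Re (\<integral>x. A x * cnj (h x) \<partial>M) = (\<integral>x. Re (A x) * Re (h x) \<partial>M) + (\<integral>x. Im (A x) * Im (h x) \<partial>M)" .
  have "Im (\<integral>x. A x * cnj (h x) \<partial>M) = (\<integral>x. Im (A x * cnj (h x)) \<partial>M)"
    by (rule integral_bounded_linear[OF bounded_linear_Im i0, symmetric])
  also have "\<dots> = (\<integral>x. Im (A x) * Re (h x) - Re (A x) * Im (h x) \<partial>M)" by simp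
  also have "\<dots> = (\<integral>x. Im (A x) * Re (h x) \<partial>M) - (\<integral>x. Re (A x) * Im (h x) \<partial>M)"
    using i3 i4 by simp
  finally show "Im (\<integral>x. A x * cnj (h x) \<partial>M) = (\<integral>x. Im (A x) * Re (h x) \<partial>M) - (\<integral>x. Re (A x) * Im (h x) \<partial>M)" .
qed

lemma weak_compact_cplx:
  fixes D :: "nat \<Rightarrow> 'a \<Rightarrow> complex"
  assumes PM: "prob_space M" and Dm[measurable]: "\<And>k. D k \<in> borel_measurable M"
    and Db: "\<And>k. AE x in M. cmod (D k x) \<le> 1"
  shows "\<exists>r ft. strict_mono r \<and> ft \<in> borel_measurable M \<and> (\<forall>x. cmod (ft x) \<le> 2) \<and>
     (\<forall>h. integrable M h \<longrightarrow> (\<lambda>k. \<integral>x. D (r k) x * cnj (h x) \<partial>M) \<longlonglongrightarrow> (\<integral>x. ft x * cnj (h x) \<partial>M))"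
proof -
  define D' where "D' k x = (if cmod (D k x) \<le> 1 then D k x else 0)" for k x
  have D'm[measurable]: "D' k \<in> borel_measurable M" for k unfolding D'_def by measurable
  have D'b: "cmod (D' k x) \<le> 1" for k x unfolding D'_def by auto
  have DD': "AE x in M. D k x = D' k x" for k using Db[of k] by eventually_elim (simp add: D'_def)
  define v1 where "v1 k x = Re (D' k x)" for k x
  have "\<exists>r w. strict_mono r \<and> w \<in> borel_measurable M \<and> (\<forall>x. \<bar>w x\<bar> \<le> 1) \<and>
     (\<forall>h. integrable M h \<longrightarrow> (\<lambda>k. \<integral>x. v1 (r k) x * h x \<partial>M) \<longlonglongrightarrow> (\<integral>x. w x * h x \<partial>M))"
    by (rule weak_compact_real_ev[OF PM]) (auto simp: v1_def intro: order_trans[OF abs_Re_le_cmod D'b])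
  then obtain r1 w1 where r1: "strict_mono r1" and w1m[measurable]: "w1 \<in> borel_measurable M" and w1b: "\<And>x. \<bar>w1 x\<bar> \<le> 1"
    and c1: "\<And>h. integrable M h \<Longrightarrow> (\<lambda>k. \<integral>x. v1 (r1 k) x * h x \<partial>M) \<longlonglongrightarrow> (\<integral>x. w1 x * h x \<partial>M)" by blast
  define v2 where "v2 k x = Im (D' (r1 k) x)" for k x
  have "\<exists>r w. strict_mono r \<and> w \<in> borel_measurable M \<and> (\<forall>x. \<bar>w x\<bar> \<le> 1) \<and>
     (\<forall>h. integrable M h \<longrightarrow> (\<lambda>k. \<integral>x. v2 (r k) x * h x \<partial>M) \<longlonglongrightarrow> (\<integral>x. w x * h x \<partial>M))"
    by (rule weak_compact_real_ev[OF PM]) (auto simp: v2_def intro: order_trans[OF abs_Im_le_cmod D'b])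
  then obtain r2 w2 where r2: "strict_mono r2" and w2m[measurable]: "w2 \<in> borel_measurable M" and w2b: "\<And>x. \<bar>w2 x\<bar> \<le> 1"
    and c2: "\<And>h. integrable M h \<Longrightarrow> (\<lambda>k. \<integral>x. v2 (r2 k) x * h x \<partial>M) \<longlonglongrightarrow> (\<integral>x. w2 x * h x \<partial>M)" by blast
  define ft where "ft x = complex_of_real (w1 x) + \<i> * complex_of_real (w2 x)" for x
  have ftm[measurable]: "ft \<in> borel_measurable M" unfolding ft_def by measurable
  have Reft[simp]: "Re (ft x) = w1 x" and Imft[simp]: "Im (ft x) = w2 x" for x unfolding ft_def by simp_all
  have ftb: "cmod (ft x) \<le> 2" for x using cmod_le[of "ft x"] w1b[of x] w2b[of x] by simp
  show ?thesis
  proof (intro exI conjI allI impI)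
    show "strict_mono (r1 \<circ> r2)" using r1 r2 by (rule strict_mono_o)
    show "ft \<in> borel_measurable M" by (rule ftm)
    show "cmod (ft x) \<le> 2" for x by (rule ftb)
    fix h :: "'a \<Rightarrow> complex" assume h: "integrable M h"
    have hm[measurable]: "h \<in> borel_measurable M" using h by auto
    have hR: "integrable M (\<lambda>x. Re (h x))" and hI: "integrable M (\<lambda>x. Im (h x))" using h by auto
    have eqD: "(\<integral>x. D k x * cnj (h x) \<partial>M) = (\<integral>x. D' k x * cnj (h x) \<partial>M)" for k
    proof (rule integral_cong_AE)
      show "(\<lambda>x. D k x * cnj (h x)) \<in> borel_measurable M" by measurable
      show "(\<lambda>x. D' k x * cnj (h x)) \<in> borel_measurable M" by measurable
      show "AE x in M. D k x * cnj (h x) = D' k x * cnj (h x)" using DD'[of k] by eventually_elim simp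
    qed
    have D'bAE: "AE x in M. cmod (D' k x) \<le> 1" for k using D'b by simp
    note sD = split_int[OF h D'm D'bAE zero_le_one]
    have ftbAE: "AE x in M. cmod (ft x) \<le> 2" using ftb by simp
    have two: "(0::real) \<le> 2" by simp
    note sF = split_int[OF h ftm ftbAE two]
    have a1: "(\<lambda>k. \<integral>x. Re (D' ((r1 \<circ> r2) k) x) * Re (h x) \<partial>M) \<longlonglongrightarrow> (\<integral>x. w1 x * Re (h x) \<partial>M)"
      using LIMSEQ_subseq_LIMSEQ[OF c1[OF hR] r2] by (simp add: o_def v1_def)
    have a2: "(\<lambda>k. \<integral>x. Re (D' ((r1 \<circ> r2) k) x) * Im (h x) \<partial>M) \<longlonglongrightarrow> (\<integral>x. w1 x * Im (h x) \<partial>M)"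
      using LIMSEQ_subseq_LIMSEQ[OF c1[OF hI] r2] by (simp add: o_def v1_def)
    have a3: "(\<lambda>k. \<integral>x. Im (D' ((r1 \<circ> r2) k) x) * Re (h x) \<partial>M) \<longlonglongrightarrow> (\<integral>x. w2 x * Re (h x) \<partial>M)"
      using c2[OF hR] by (simp add: o_def v2_def)
    have a4: "(\<lambda>k. \<integral>x. Im (D' ((r1 \<circ> r2) k) x) * Im (h x) \<partial>M) \<longlonglongrightarrow> (\<integral>x. w2 x * Im (h x) \<partial>M)"
      using c2[OF hI] by (simp add: o_def v2_def)
    show "(\<lambda>k. \<integral>x. D ((r1 \<circ> r2) k) x * cnj (h x) \<partial>M) \<longlonglongrightarrow> (\<integral>x. ft x * cnj (h x) \<partial>M)"
      unfolding eqD tendsto_complex_iff sD(2) sD(3) sF(2) sF(3) Reft Imft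
      using tendsto_add[OF a1 a4] tendsto_diff[OF a3 a2] by simp
  qed
qed

lemma mpt_comp: assumes "mpt M f" "mpt M g" shows "mpt M (f \<circ> g)"
proof -
  have fm: "f \<in> measurable M M" and gm: "g \<in> measurable M M" using assms unfolding mpt_def by auto
  have "distr M M (f \<circ> g) = distr (distr M M g) M f" using distr_distr[OF fm gm] by simp
  also have "\<dots> = M" using assms unfolding mpt_def by simp
  finally show ?thesis unfolding mpt_def using measurable_comp[OF gm fm] by simp
qed

lemma mpt_id: "mpt M (\<lambda>x. x)"
  unfolding mpt_def by (simp add: distr_id measurable_ident_sets)

lemma mpt_funpow: assumes "mpt M f" shows "mpt M (f ^^ n)"
proof (induction n)
  case 0 then show ?case by (simp add: mpt_id id_def)
next
  case (Suc n) then show ?case using mpt_comp[OF assms Suc] by (simp add: comp_def)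
qed

lemma mpt_tpow: assumes "mpt M S" "mpt M (inv S)" shows "mpt M (tpow S k)"
  unfolding tpow_def using mpt_funpow[OF assms(1)] mpt_funpow[OF assms(2)] by auto

lemma funpow_cancel: fixes f g :: "'a \<Rightarrow> 'a" assumes "\<And>y. g (f y) = y" shows "(g ^^ n) ((f ^^ n) x) = x"
proof (induction n arbitrary: x)
  case 0 then show ?case by simp
next
  case (Suc n)
  have e1: "(f ^^ Suc n) x = f ((f ^^ n) x)" by simp
  have e2: "(g ^^ Suc n) y = (g ^^ n) (g y)" for y by (simp only: funpow_Suc_right comp_def)
  show ?case unfolding e1 e2 assms Suc ..
qed

lemma tpow_cancel: assumes "bij S" shows "tpow S (- k) (tpow S k x) = x"
proof -
  have a: "inv S (S y) = y" for y using assms by (simp add: bij_is_inj)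
  have b: "S (inv S y) = y" for y using assms by (simp add: bij_is_surj surj_f_inv_f)
  show ?thesis
  proof (cases "k = 0")
    case True then show ?thesis by (simp add: tpow_def)
  next
    case False
    show ?thesis
    proof (cases "0 < k")
      case True then show ?thesis unfolding tpow_def using funpow_cancel[of "inv S" S, OF a] by simp
    next
      case False
      with \<open>k \<noteq> 0\<close> have "k < 0" by simp
      then show ?thesis unfolding tpow_def using funpow_cancel[of S "inv S", OF b] by simp
    qed
  qed
qed

lemma mpt_meas: "mpt M \<phi> \<Longrightarrow> \<phi> \<in> measurable M M" by (simp add: mpt_def)

lemma mpt_integral: fixes G :: "'a \<Rightarrow> 'b::{banach, second_countable_topology}" assumes "mpt M \<phi>" "G \<in> borel_measurable M"
  shows "(\<integral>x. G x \<partial>M) = (\<integral>x. G (\<phi> x) \<partial>M)"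
proof -
  have "(\<integral>x. G (\<phi> x) \<partial>M) = integral\<^sup>L (distr M M \<phi>) G"
    using integral_distr[OF mpt_meas[OF assms(1)] assms(2)] by simp
  then show ?thesis using assms by (simp add: mpt_def)
qed

lemma mpt_AE: assumes "mpt M \<phi>" "AE x in M. P x" shows "AE x in M. P (\<phi> x)"
proof -
  have e: "distr M M \<phi> = M" using assms(1) by (simp add: mpt_def)
  have "AE x in distr M M \<phi>. P x" unfolding e by (rule assms(2))
  then show ?thesis using assms by (intro AE_distrD[of \<phi> M M]) (auto simp: mpt_def)
qed


lemma sys_mpt: assumes "mps_system M l T" "j \<in> {1..l}" shows "mpt M (tpow (T j) k)"
  using assms unfolding mps_system_def by (intro mpt_tpow) auto

lemma sys_bij: assumes "mps_system M l T" "j \<in> {1..l}" shows "bij (T j)"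
  using assms unfolding mps_system_def by auto

lemma prod_bd:
  fixes u :: "'b \<Rightarrow> complex"
  assumes "\<forall>j\<in>J. cmod (u j) \<le> 1" shows "cmod (\<Prod>j\<in>J. u j) \<le> 1"
proof -
  have "cmod (\<Prod>j\<in>J. u j) \<le> (\<Prod>j\<in>J. cmod (u j))" by (rule norm_prod_le)
  also have "\<dots> \<le> 1" using assms by (intro prod_le_1) auto
  finally show ?thesis .
qed

lemma avg_bd:
  fixes F :: "nat \<Rightarrow> 'a \<Rightarrow> complex"
  assumes "\<And>n. cmod (F n x) \<le> C" "0 \<le> C" shows "cmod (avg N F x) \<le> C"
proof (cases "N = 0")
  case True then show ?thesis using assms by (simp add: avg_def)
next
  case False
  have "cmod (\<Sum>n=1..N. F n x) \<le> (\<Sum>n=1..N. cmod (F n x))" by (rule norm_sum)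
  also have "\<dots> \<le> (\<Sum>n=1..N. C)" using assms by (intro sum_mono) auto
  also have "\<dots> = real N * C" by simp
  finally have "cmod (\<Sum>n=1..N. F n x) \<le> real N * C" .
  then show ?thesis using False by (simp add: avg_def norm_divide field_simps)
qed

lemma avg_meas[measurable]:
  fixes F :: "nat \<Rightarrow> 'a \<Rightarrow> complex"
  assumes [measurable]: "\<And>n. F n \<in> borel_measurable M" shows "avg N F \<in> borel_measurable M"
  unfolding avg_def by measurable

lemma int_AEbdd:
  fixes F :: "'a \<Rightarrow> 'b::{banach, second_countable_topology}"
  assumes "prob_space M" "F \<in> borel_measurable M" "AE x in M. norm (F x) \<le> C"
  shows "integrable M F"
proof -
  interpret prob_space M by fact
  show ?thesis using assms(2,3) by (intro integrable_const_bound[where B=C]) auto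
qed

lemma L1_le_L2:
  fixes G :: "'a \<Rightarrow> complex"
  assumes PM: "prob_space M" and Gm[measurable]: "G \<in> borel_measurable M" and Gb: "AE x in M. cmod (G x) \<le> C"
  shows "(\<integral>x. cmod (G x) \<partial>M) \<le> L2norm M G"
proof -
  interpret prob_space M by fact
  define c where "c = (\<integral>x. cmod (G x) \<partial>M)"
  have i1: "integrable M (\<lambda>x. cmod (G x))" using Gb by (intro int_AEbdd[OF PM, where C=C]) auto
  have i2: "integrable M (\<lambda>x. (cmod (G x))\<^sup>2)"
  proof (rule int_AEbdd[OF PM, where C="C^2"])
    show "AE x in M. norm ((cmod (G x))\<^sup>2) \<le> C^2" using Gb
      by eventually_elim (auto intro: power_mono)
  qed simp
  have c0: "0 \<le> c" unfolding c_def by simp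
  have e: "(\<lambda>x. (cmod (G x) - c)\<^sup>2) = (\<lambda>x. (cmod (G x))\<^sup>2 - 2 * c * cmod (G x) + c^2)"
    by (auto simp: fun_eq_iff power2_diff algebra_simps)
  have "0 \<le> (\<integral>x. (cmod (G x) - c)\<^sup>2 \<partial>M)" by simp
  also have "\<dots> = (\<integral>x. (cmod (G x))\<^sup>2 - 2 * c * cmod (G x) + c^2 \<partial>M)" by (simp only: e)
  also have "\<dots> = (\<integral>x. (cmod (G x))\<^sup>2 \<partial>M) - 2 * c * c + c^2"
    using i1 i2 by (simp add: c_def prob_space)
  finally have "c^2 \<le> (\<integral>x. (cmod (G x))\<^sup>2 \<partial>M)" by (simp add: power2_eq_square)
  then show ?thesis unfolding L2norm_def c_def[symmetric] by (rule real_le_rsqrt)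
qed

lemma prodf:
  fixes u :: "nat \<Rightarrow> 'a \<Rightarrow> complex"
  assumes "finite J" "\<And>j. j \<in> J \<Longrightarrow> u j \<in> borel_measurable M" "\<And>j. j \<in> J \<Longrightarrow> AE x in M. cmod (u j x) \<le> 1"
  shows "(\<lambda>x. \<Prod>j\<in>J. u j x) \<in> borel_measurable M" "AE x in M. cmod (\<Prod>j\<in>J. u j x) \<le> 1"
proof -
  show "(\<lambda>x. \<Prod>j\<in>J. u j x) \<in> borel_measurable M" using assms(2) by (rule borel_measurable_prod)
  have "AE x in M. \<forall>j\<in>J. cmod (u j x) \<le> 1" using assms(1,3) by (rule AE_finite_allI)
  then show "AE x in M. cmod (\<Prod>j\<in>J. u j x) \<le> 1" by eventually_elim (rule prod_bd)
qed

lemma fcomp: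
  assumes sys: "mps_system M l T" and fbd: "\<forall>j\<in>{1..l}. one_bounded M (f j)" and j: "j \<in> {1..l}" and psi: "mpt M \<psi>"
  shows "(\<lambda>x. f j (\<psi> x)) \<in> borel_measurable M" "AE x in M. cmod (f j (\<psi> x)) \<le> 1"
proof -
  have fm: "f j \<in> borel_measurable M" and fb: "AE x in M. cmod (f j x) \<le> 1" using fbd j by (auto simp: one_bounded_def)
  show "(\<lambda>x. f j (\<psi> x)) \<in> borel_measurable M" using measurable_comp[OF mpt_meas[OF psi] fm] by (simp add: comp_def)
  show "AE x in M. cmod (f j (\<psi> x)) \<le> 1" using mpt_AE[OF psi fb] .
qed

lemma key:
  fixes M :: "'a measure" and T :: "nat \<Rightarrow> 'a \<Rightarrow> 'a" and f :: "nat \<Rightarrow> 'a \<Rightarrow> complex"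
    and a :: "nat \<Rightarrow> nat \<Rightarrow> int" and g \<phi> :: "'a \<Rightarrow> complex"
  assumes sys: "mps_system M l T" and m: "m \<in> {1..l}"
    and fbd: "\<forall>j\<in>{1..l}. one_bounded M (f j)"
    and gm[measurable]: "g \<in> borel_measurable M" and gb: "AE x in M. cmod (g x) \<le> 1"
    and pm[measurable]: "\<phi> \<in> borel_measurable M" and pb: "AE x in M. cmod (\<phi> x) \<le> C" and C: "0 \<le> C"
  shows "(\<integral>x. avg N (\<lambda>n x. g (tpow (T m) (- a m n) x) *
                    (\<Prod>j\<in>{1..l}-{m}. cnj (f j (tpow (T j) (a j n) (tpow (T m) (- a m n) x))))) x * cnj (\<phi> x) \<partial>M)
       = cnj (\<integral>x. avg N (\<lambda>n x. \<phi> (tpow (T m) (a m n) x) *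
                    (\<Prod>j\<in>{1..l}-{m}. f j (tpow (T j) (a j n) x))) x * cnj (g x) \<partial>M)"
proof -
  have PM: "prob_space M" using sys by (simp add: mps_system_def)
  interpret prob_space M by (rule PM)
  define J where "J = {1..l} - {m}"
  have fJ: "finite J" unfolding J_def by simp
  have JL: "j \<in> J \<Longrightarrow> j \<in> {1..l}" for j unfolding J_def by auto
  define S where "S k = tpow (T m) k" for k
  define R where "R j n = tpow (T j) (a j n)" for j n
  have mS: "mpt M (S k)" for k unfolding S_def by (rule sys_mpt[OF sys m])
  have mR: "j \<in> J \<Longrightarrow> mpt M (R j n)" for j n unfolding R_def by (rule sys_mpt[OF sys JL])
  have canc: "S (- k) (S k y) = y" for k y unfolding S_def using tpow_cancel[OF sys_bij[OF sys m]] .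
  define Fn where "Fn n x = g (S (- a m n) x) * (\<Prod>j\<in>J. cnj (f j (R j n (S (- a m n) x)))) * cnj (\<phi> x)" for n x
  define Hn where "Hn n y = \<phi> (S (a m n) y) * (\<Prod>j\<in>J. f j (R j n y)) * cnj (g y)" for n y
  have P1: "(\<lambda>x. \<Prod>j\<in>J. cnj (f j (R j n (S (- a m n) x)))) \<in> borel_measurable M"
       "AE x in M. cmod (\<Prod>j\<in>J. cnj (f j (R j n (S (- a m n) x)))) \<le> 1" for n
  proof -
    have *: "mpt M (\<lambda>x. R j n (S (- a m n) x))" if "j \<in> J" for j
      using mpt_comp[OF mR[OF that] mS] by (simp add: comp_def)
    show "(\<lambda>x. \<Prod>j\<in>J. cnj (f j (R j n (S (- a m n) x)))) \<in> borel_measurable M"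
    proof (rule prodf(1)[OF fJ])
      fix j assume j: "j \<in> J"
      show "(\<lambda>x. cnj (f j (R j n (S (- a m n) x)))) \<in> borel_measurable M" using fcomp(1)[OF sys fbd JL[OF j] *[OF j]] by simp
      show "AE x in M. cmod (cnj (f j (R j n (S (- a m n) x)))) \<le> 1" using fcomp(2)[OF sys fbd JL[OF j] *[OF j]] by simp
    qed
    show "AE x in M. cmod (\<Prod>j\<in>J. cnj (f j (R j n (S (- a m n) x)))) \<le> 1"
    proof (rule prodf(2)[OF fJ])
      fix j assume j: "j \<in> J"
      show "(\<lambda>x. cnj (f j (R j n (S (- a m n) x)))) \<in> borel_measurable M" using fcomp(1)[OF sys fbd JL[OF j] *[OF j]] by simp
      show "AE x in M. cmod (cnj (f j (R j n (S (- a m n) x)))) \<le> 1" using fcomp(2)[OF sys fbd JL[OF j] *[OF j]] by simp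
    qed
  qed
  have P2: "(\<lambda>x. \<Prod>j\<in>J. f j (R j n x)) \<in> borel_measurable M"
       "AE x in M. cmod (\<Prod>j\<in>J. f j (R j n x)) \<le> 1" for n
  proof -
    show "(\<lambda>x. \<Prod>j\<in>J. f j (R j n x)) \<in> borel_measurable M"
    proof (rule prodf(1)[OF fJ])
      fix j assume j: "j \<in> J"
      show "(\<lambda>x. f j (R j n x)) \<in> borel_measurable M" using fcomp(1)[OF sys fbd JL[OF j] mR[OF j]] .
      show "AE x in M. cmod (f j (R j n x)) \<le> 1" using fcomp(2)[OF sys fbd JL[OF j] mR[OF j]] .
    qed
    show "AE x in M. cmod (\<Prod>j\<in>J. f j (R j n x)) \<le> 1"
    proof (rule prodf(2)[OF fJ])
      fix j assume j: "j \<in> J"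
      show "(\<lambda>x. f j (R j n x)) \<in> borel_measurable M" using fcomp(1)[OF sys fbd JL[OF j] mR[OF j]] .
      show "AE x in M. cmod (f j (R j n x)) \<le> 1" using fcomp(2)[OF sys fbd JL[OF j] mR[OF j]] .
    qed
  qed
  have Smeas: "S k \<in> measurable M M" for k using mpt_meas[OF mS] .
  have gS: "(\<lambda>x. g (S k x)) \<in> borel_measurable M" "AE x in M. cmod (g (S k x)) \<le> 1" for k
    using measurable_comp[OF Smeas gm] mpt_AE[OF mS gb] by (auto simp: comp_def)
  have pS: "(\<lambda>x. \<phi> (S k x)) \<in> borel_measurable M" "AE x in M. cmod (\<phi> (S k x)) \<le> C" for k
    using measurable_comp[OF Smeas pm] mpt_AE[OF mS pb] by (auto simp: comp_def)
  have Fm: "Fn n \<in> borel_measurable M" for n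
    unfolding Fn_def using gS(1) P1(1) by measurable
  have Hm: "Hn n \<in> borel_measurable M" for n
    unfolding Hn_def using pS(1) P2(1) by measurable
  have mul3: "cmod (u1 * u2 * u3) \<le> C" if "cmod u1 \<le> 1" "cmod u2 \<le> 1" "cmod u3 \<le> C" for u1 u2 u3 :: complex
  proof -
    have "cmod (u1 * u2 * u3) = cmod u1 * cmod u2 * cmod u3" by (simp add: norm_mult)
    also have "\<dots> \<le> 1 * 1 * C" using that by (intro mult_mono) auto
    finally show ?thesis by simp
  qed
  have Fi: "integrable M (Fn n)" for n
  proof (rule int_AEbdd[OF PM Fm, where C=C])
    show "AE x in M. norm (Fn n x) \<le> C" using gS(2)[of "- a m n"] P1(2)[of n] pb
      by eventually_elim (auto simp: Fn_def intro!: mul3)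
  qed
  have Hi: "integrable M (Hn n)" for n
  proof (rule int_AEbdd[OF PM Hm, where C=C])
    show "AE x in M. norm (Hn n x) \<le> C" using gb P2(2)[of n] pS(2)[of "a m n"]
    proof eventually_elim
      fix x assume a1: "cmod (g x) \<le> 1" and a2: "cmod (\<Prod>j\<in>J. f j (R j n x)) \<le> 1" and a3: "cmod (\<phi> (S (a m n) x)) \<le> C"
      have "cmod (cnj (g x) * (\<Prod>j\<in>J. f j (R j n x)) * \<phi> (S (a m n) x)) \<le> C" using a1 a2 a3 by (intro mul3) auto
      moreover have "Hn n x = cnj (g x) * (\<Prod>j\<in>J. f j (R j n x)) * \<phi> (S (a m n) x)" by (simp add: Hn_def mult_ac)
      ultimately show "norm (Hn n x) \<le> C" by simp
    qed
  qed
  have FH: "(\<integral>x. Fn n x \<partial>M) = cnj (\<integral>x. Hn n x \<partial>M)" for n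
  proof -
    have "(\<integral>x. Fn n x \<partial>M) = (\<integral>y. Fn n (S (a m n) y) \<partial>M)" by (rule mpt_integral[OF mS Fm])
    also have "\<dots> = (\<integral>y. cnj (Hn n y) \<partial>M)"
      by (intro Bochner_Integration.integral_cong refl) (simp add: Fn_def Hn_def canc cnj_prod mult_ac)
    also have "\<dots> = cnj (\<integral>x. Hn n x \<partial>M)" by simp
    finally show ?thesis .
  qed
  have L: "(\<lambda>x. avg N (\<lambda>n x. g (tpow (T m) (- a m n) x) *
                    (\<Prod>j\<in>{1..l}-{m}. cnj (f j (tpow (T j) (a j n) (tpow (T m) (- a m n) x))))) x * cnj (\<phi> x))
      = (\<lambda>x. (\<Sum>n=1..N. Fn n x) / of_nat N)"
    by (auto simp: fun_eq_iff avg_def Fn_def J_def S_def R_def sum_distrib_right)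
  have Rr: "(\<lambda>x. avg N (\<lambda>n x. \<phi> (tpow (T m) (a m n) x) *
                    (\<Prod>j\<in>{1..l}-{m}. f j (tpow (T j) (a j n) x))) x * cnj (g x))
      = (\<lambda>x. (\<Sum>n=1..N. Hn n x) / of_nat N)"
    by (auto simp: fun_eq_iff avg_def Hn_def J_def S_def R_def sum_distrib_right)
  have "(\<integral>x. (\<Sum>n=1..N. Fn n x) / of_nat N \<partial>M) = (\<Sum>n=1..N. (\<integral>x. Fn n x \<partial>M)) / of_nat N"
    using Fi by (simp add: integral_sum)
  also have "\<dots> = (\<Sum>n=1..N. cnj (\<integral>x. Hn n x \<partial>M)) / of_nat N" by (simp add: FH)
  also have "\<dots> = cnj ((\<Sum>n=1..N. (\<integral>x. Hn n x \<partial>M)) / of_nat N)" by (simp add: cnj_sum)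
  also have "(\<Sum>n=1..N. (\<integral>x. Hn n x \<partial>M)) / of_nat N = (\<integral>x. (\<Sum>n=1..N. Hn n x) / of_nat N \<partial>M)"
    using Hi by (simp add: integral_sum)
  finally show ?thesis unfolding L Rr .
qed

lemma prodJ:
  fixes M :: "'a measure" and T :: "nat \<Rightarrow> 'a \<Rightarrow> 'a" and f :: "nat \<Rightarrow> 'a \<Rightarrow> complex"
  assumes sys: "mps_system M l T" and fbd: "\<forall>j\<in>{1..l}. one_bounded M (f j)" and J: "J \<subseteq> {1..l}"
    and psi: "\<And>j. j \<in> J \<Longrightarrow> mpt M (\<psi> j)"
  shows "(\<lambda>x. \<Prod>j\<in>J. f j (\<psi> j x)) \<in> borel_measurable M" "AE x in M. cmod (\<Prod>j\<in>J. f j (\<psi> j x)) \<le> 1"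
    "(\<lambda>x. \<Prod>j\<in>J. cnj (f j (\<psi> j x))) \<in> borel_measurable M" "AE x in M. cmod (\<Prod>j\<in>J. cnj (f j (\<psi> j x))) \<le> 1"
proof -
  have fJ: "finite J" using J finite_subset by blast
  have JL: "j \<in> J \<Longrightarrow> j \<in> {1..l}" for j using J by auto
  note c1 = fcomp(1)[OF sys fbd JL psi] and c2 = fcomp(2)[OF sys fbd JL psi]
  show "(\<lambda>x. \<Prod>j\<in>J. f j (\<psi> j x)) \<in> borel_measurable M"
    by (rule prodf(1)[OF fJ]) (use c1 c2 in auto)
  show "AE x in M. cmod (\<Prod>j\<in>J. f j (\<psi> j x)) \<le> 1"
    by (rule prodf(2)[OF fJ]) (use c1 c2 in auto)
  show "(\<lambda>x. \<Prod>j\<in>J. cnj (f j (\<psi> j x))) \<in> borel_measurable M"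
    by (rule prodf(1)[OF fJ]) (use c1 c2 in auto)
  show "AE x in M. cmod (\<Prod>j\<in>J. cnj (f j (\<psi> j x))) \<le> 1"
    by (rule prodf(2)[OF fJ]) (use c1 c2 in auto)
qed

lemma avg_AE:
  fixes F :: "nat \<Rightarrow> 'a \<Rightarrow> complex"
  assumes "\<And>n. AE x in M. cmod (F n x) \<le> C" "0 \<le> C"
  shows "AE x in M. cmod (avg N F x) \<le> C"
proof -
  have "AE x in M. \<forall>n. cmod (F n x) \<le> C" using assms(1) by (simp add: AE_all_countable)
  then show ?thesis by eventually_elim (rule avg_bd, auto simp: assms(2))
qed

lemma mult_AE:
  fixes u v :: "'a \<Rightarrow> complex"
  assumes "AE x in M. cmod (u x) \<le> C" "AE x in M. cmod (v x) \<le> 1" "0 \<le> C"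
  shows "AE x in M. cmod (u x * v x) \<le> C"
  using assms(1,2)
proof eventually_elim
  fix x assume "cmod (u x) \<le> C" "cmod (v x) \<le> 1"
  then have "cmod (u x) * cmod (v x) \<le> C * 1" using assms(3) by (intro mult_mono) auto
  then show "cmod (u x * v x) \<le> C" by (simp add: norm_mult)
qed

lemma Gprops:
  fixes M :: "'a measure" and T :: "nat \<Rightarrow> 'a \<Rightarrow> 'a" and f :: "nat \<Rightarrow> 'a \<Rightarrow> complex"
    and a :: "nat \<Rightarrow> nat \<Rightarrow> int" and \<phi> :: "'a \<Rightarrow> complex"
  assumes sys: "mps_system M l T" and m: "m \<in> {1..l}"
    and fbd: "\<forall>j\<in>{1..l}. one_bounded M (f j)"
    and pm[measurable]: "\<phi> \<in> borel_measurable M" and pb: "AE x in M. cmod (\<phi> x) \<le> C" and C: "0 \<le> C"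
  shows "avg N (\<lambda>n x. \<phi> (tpow (T m) (a m n) x) * (\<Prod>j\<in>{1..l}-{m}. f j (tpow (T j) (a j n) x))) \<in> borel_measurable M"
    "AE x in M. cmod (avg N (\<lambda>n x. \<phi> (tpow (T m) (a m n) x) * (\<Prod>j\<in>{1..l}-{m}. f j (tpow (T j) (a j n) x))) x) \<le> C"
proof -
  have J: "{1..l}-{m} \<subseteq> {1..l}" by auto
  have mR: "j \<in> {1..l}-{m} \<Longrightarrow> mpt M (tpow (T j) (a j n))" for j n by (rule sys_mpt[OF sys]) auto
  note P = prodJ[OF sys fbd J mR]
  have mS: "mpt M (tpow (T m) k)" for k by (rule sys_mpt[OF sys m])
  have pS: "(\<lambda>x. \<phi> (tpow (T m) k x)) \<in> borel_measurable M" "AE x in M. cmod (\<phi> (tpow (T m) k x)) \<le> C" for k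
    using measurable_comp[OF mpt_meas[OF mS] pm] mpt_AE[OF mS pb] by (auto simp: comp_def)
  show "avg N (\<lambda>n x. \<phi> (tpow (T m) (a m n) x) * (\<Prod>j\<in>{1..l}-{m}. f j (tpow (T j) (a j n) x))) \<in> borel_measurable M"
    by (rule avg_meas) (use pS(1) P(1) in measurable)
  show "AE x in M. cmod (avg N (\<lambda>n x. \<phi> (tpow (T m) (a m n) x) * (\<Prod>j\<in>{1..l}-{m}. f j (tpow (T j) (a j n) x))) x) \<le> C"
    by (rule avg_AE[OF _ C], rule mult_AE[OF pS(2) P(2) C])
qed

lemma Dprops:
  fixes M :: "'a measure" and T :: "nat \<Rightarrow> 'a \<Rightarrow> 'a" and f :: "nat \<Rightarrow> 'a \<Rightarrow> complex"
    and a :: "nat \<Rightarrow> nat \<Rightarrow> int" and g :: "'a \<Rightarrow> complex"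
  assumes sys: "mps_system M l T" and m: "m \<in> {1..l}"
    and fbd: "\<forall>j\<in>{1..l}. one_bounded M (f j)"
    and gm[measurable]: "g \<in> borel_measurable M" and gb: "AE x in M. cmod (g x) \<le> 1"
  shows "avg N (\<lambda>n x. g (tpow (T m) (- a m n) x) *
                    (\<Prod>j\<in>{1..l}-{m}. cnj (f j (tpow (T j) (a j n) (tpow (T m) (- a m n) x))))) \<in> borel_measurable M"
    "AE x in M. cmod (avg N (\<lambda>n x. g (tpow (T m) (- a m n) x) *
                    (\<Prod>j\<in>{1..l}-{m}. cnj (f j (tpow (T j) (a j n) (tpow (T m) (- a m n) x))))) x) \<le> 1"
proof -
  have J: "{1..l}-{m} \<subseteq> {1..l}" by auto
  have mS: "mpt M (tpow (T m) k)" for k by (rule sys_mpt[OF sys m])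
  have mR: "j \<in> {1..l}-{m} \<Longrightarrow> mpt M (\<lambda>x. tpow (T j) (a j n) (tpow (T m) (- a m n) x))" for j n
    using mpt_comp[OF sys_mpt[OF sys, of j] mS] by (auto simp: comp_def)
  note P = prodJ[OF sys fbd J mR]
  have gS: "(\<lambda>x. g (tpow (T m) k x)) \<in> borel_measurable M" "AE x in M. cmod (g (tpow (T m) k x)) \<le> 1" for k
    using measurable_comp[OF mpt_meas[OF mS] gm] mpt_AE[OF mS gb] by (auto simp: comp_def)
  show "avg N (\<lambda>n x. g (tpow (T m) (- a m n) x) *
                    (\<Prod>j\<in>{1..l}-{m}. cnj (f j (tpow (T j) (a j n) (tpow (T m) (- a m n) x))))) \<in> borel_measurable M"
    by (rule avg_meas) (use gS(1) P(3) in measurable)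
  show "AE x in M. cmod (avg N (\<lambda>n x. g (tpow (T m) (- a m n) x) *
                    (\<Prod>j\<in>{1..l}-{m}. cnj (f j (tpow (T j) (a j n) (tpow (T m) (- a m n) x))))) x) \<le> 1"
    by (rule avg_AE[OF _ zero_le_one], rule mult_AE[OF gS(2) P(4) zero_le_one])
qed

lemma L2_int:
  fixes h :: "'a \<Rightarrow> complex"
  assumes PM: "prob_space M" and h: "in_L2 M h"
  shows "integrable M h"
proof -
  interpret prob_space M by (rule PM)
  have hm[measurable]: "h \<in> borel_measurable M" and h2: "integrable M (\<lambda>x. (cmod (h x))\<^sup>2)" using h by (auto simp: in_L2_def)
  have t: "t \<le> 1 + t^2" if "0 \<le> t" for t :: real
  proof (cases "t \<le> 1")
    case True then show ?thesis by (simp add: add_increasing2)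
  next
    case False then have "t \<le> t * t" by (simp add: mult_le_cancel_left1)
    then show ?thesis by (simp add: power2_eq_square)
  qed
  show ?thesis
  proof (rule int_bdd_C[where g="\<lambda>x. 1 + (cmod (h x))\<^sup>2" and C=1])
    show "integrable M (\<lambda>x. 1 + (cmod (h x))\<^sup>2)" using h2 by simp
    show "h \<in> borel_measurable M" by simp
    show "AE x in M. norm (h x) \<le> 1 * norm (1 + (cmod (h x))\<^sup>2)" using t[of "cmod (h x)" for x] by (auto intro!: AE_I2)
  qed
qed

lemma AE_mul_real:
  fixes p q :: "'a \<Rightarrow> real"
  assumes "AE x in M. \<bar>p x\<bar> \<le> a" "AE x in M. \<bar>q x\<bar> \<le> b"
  shows "AE x in M. norm (p x * q x) \<le> a * b"
  using assms
proof eventually_elim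
  fix x assume a1: "\<bar>p x\<bar> \<le> a" and a2: "\<bar>q x\<bar> \<le> b"
  have "0 \<le> a" using a1 abs_ge_zero[of "p x"] by linarith
  then have "\<bar>p x\<bar> * \<bar>q x\<bar> \<le> a * b" using a1 a2 by (intro mult_mono) auto
  then show "norm (p x * q x) \<le> a * b" by (simp add: abs_mult)
qed

theorem mainTheorem6:
  fixes M A :: "'a measure" and l m :: nat and T :: "nat \<Rightarrow> 'a \<Rightarrow> 'a"
    and a :: "nat \<Rightarrow> nat \<Rightarrow> int" and f :: "nat \<Rightarrow> 'a \<Rightarrow> complex" and \<delta> :: real
  assumes sys: "mps_system M l T"
    and delta: "\<delta> > 0"
    and fbd: "\<forall>j\<in>{1..l}. one_bounded M (f j)"
    and hyp: "limsup (\<lambda>N. ereal (L2norm M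
               (avg N (\<lambda>n x. \<Prod>j\<in>{1..l}. f j (tpow (T j) (a j n) x))))) \<ge> ereal \<delta>"
    and m: "m \<in> {1..l}"
    and sub: "subalgebra M A"
    and fm: "f m \<in> borel_measurable A"
  shows "\<exists>Nk :: nat \<Rightarrow> nat. \<exists>g :: nat \<Rightarrow> 'a \<Rightarrow> complex. \<exists>ft :: 'a \<Rightarrow> complex.
           filterlim Nk at_top sequentially \<and>
           (\<forall>k. one_bounded M (g k)) \<and>
           weak_L2_limit M
             (\<lambda>k. avg (Nk k) (\<lambda>n x. g k (tpow (T m) (- a m n) x) *
                    (\<Prod>j\<in>{1..l}-{m}. cnj (f j (tpow (T j) (a j n) (tpow (T m) (- a m n) x))))))
             ft \<and>
           limsup (\<lambda>k. ereal (L2norm M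
               (avg (Nk k) (\<lambda>n x. cond_exp_c M A ft (tpow (T m) (a m n) x) *
                    (\<Prod>j\<in>{1..l}-{m}. f j (tpow (T j) (a j n) x)))))) \<ge> ereal (\<delta> ^ 4)"
proof -
  have PM: "prob_space M" using sys by (simp add: mps_system_def)
  interpret prob_space M by (rule PM)
  define Pn where "Pn = (\<lambda>n x. \<Prod>j\<in>{1..l}. f j (tpow (T j) (a j n) x))"
  define FN where "FN = (\<lambda>N. avg N Pn)"
  have mR: "j \<in> {1..l} \<Longrightarrow> mpt M (tpow (T j) (a j n))" for j n by (rule sys_mpt[OF sys])
  note PP = prodJ[OF sys fbd order_refl mR]
  have FNm: "FN N \<in> borel_measurable M" for N unfolding FN_def Pn_def by (rule avg_meas) (rule PP(1))
  have FNb: "AE x in M. cmod (FN N x) \<le> 1" for N unfolding FN_def Pn_def by (rule avg_AE[OF PP(2) zero_le_one])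
  have hyp': "ereal \<delta> \<le> limsup (\<lambda>N. ereal (L2norm M (FN N)))" using hyp by (simp add: FN_def Pn_def)
  have ex: "\<exists>N. k \<le> N \<and> \<delta> - 1 / (real k + 1) < L2norm M (FN N)" for k
  proof (rule ccontr)
    assume "\<not> ?thesis"
    then have "\<forall>N\<ge>k. L2norm M (FN N) \<le> \<delta> - 1 / (real k + 1)" by (auto simp: not_less)
    then have "eventually (\<lambda>N. ereal (L2norm M (FN N)) \<le> ereal (\<delta> - 1 / (real k + 1))) sequentially"
      by (auto simp: eventually_sequentially)
    then have "limsup (\<lambda>N. ereal (L2norm M (FN N))) \<le> ereal (\<delta> - 1 / (real k + 1))" by (rule Limsup_bounded)
    then have "ereal \<delta> \<le> ereal (\<delta> - 1 / (real k + 1))" using hyp' by (rule order_trans[rotated])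
    then have "\<delta> \<le> \<delta> - 1 / (real k + 1)" by simp
    moreover have "0 < 1 / (real k + 1)" by simp
    ultimately show False by linarith
  qed
  obtain N0 where N0k: "\<And>k. k \<le> N0 k" and N0L: "\<And>k. \<delta> - 1 / (real k + 1) < L2norm M (FN (N0 k))"
    using ex by metis
  define D where "D k = avg (N0 k) (\<lambda>n x. FN (N0 k) (tpow (T m) (- a m n) x) *
                    (\<Prod>j\<in>{1..l}-{m}. cnj (f j (tpow (T j) (a j n) (tpow (T m) (- a m n) x)))))" for k
  have Dm: "D k \<in> borel_measurable M" for k unfolding D_def by (rule Dprops(1)[OF sys m fbd FNm FNb])
  have Db: "AE x in M. cmod (D k x) \<le> 1" for k unfolding D_def by (rule Dprops(2)[OF sys m fbd FNm FNb])
  have "\<exists>r ft. strict_mono r \<and> ft \<in> borel_measurable M \<and> (\<forall>x. cmod (ft x) \<le> 2) \<and>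
     (\<forall>h. integrable M h \<longrightarrow> (\<lambda>k. \<integral>x. D (r k) x * cnj (h x) \<partial>M) \<longlonglongrightarrow> (\<integral>x. ft x * cnj (h x) \<partial>M))"
    by (rule weak_compact_cplx[OF PM Dm Db])
  then obtain r ft where rft: "strict_mono r \<and> ft \<in> borel_measurable M \<and> (\<forall>x. cmod (ft x) \<le> 2) \<and>
     (\<forall>h. integrable M h \<longrightarrow> (\<lambda>k. \<integral>x. D (r k) x * cnj (h x) \<partial>M) \<longlonglongrightarrow> (\<integral>x. ft x * cnj (h x) \<partial>M))"
    by (elim exE)
  have r: "strict_mono r" using rft by (rule conjunct1)
  have ftm[measurable]: "ft \<in> borel_measurable M" using rft by (elim conjE)
  have ftb: "cmod (ft x) \<le> 2" for x using rft by (elim conjE) (erule allE)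
  have conv: "(\<lambda>k. \<integral>x. D (r k) x * cnj (h x) \<partial>M) \<longlonglongrightarrow> (\<integral>x. ft x * cnj (h x) \<partial>M)" if "integrable M h" for h
    using rft that by (elim conjE) (erule allE, erule impE)
  define Nk where "Nk k = N0 (r k)" for k
  define g where "g k = FN (N0 (r k))" for k
  have rk: "k \<le> r k" for k using r by (rule seq_suble)
  define h where "h = cond_exp_c M A ft"
  interpret MA: finite_measure "restr_to_subalg M A" by (rule finite_measure_restr_to_subalg[OF sub finite_measure_axioms])
  interpret SA: sigma_finite_subalgebra M A by (rule sigma_finite_subalgebra.intro[OF sub MA.sigma_finite_measure_axioms])
  define ftR where "ftR x = Re (ft x)" for x
  define ftI where "ftI x = Im (ft x)" for x
  have ftRm[measurable]: "ftR \<in> borel_measurable M" "ftI \<in> borel_measurable M" unfolding ftR_def[abs_def] ftI_def[abs_def] using ftm by auto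
  have ftRb: "\<bar>ftR x\<bar> \<le> 2" "\<bar>ftI x\<bar> \<le> 2" for x
    unfolding ftR_def ftI_def using ftb[of x] abs_Re_le_cmod[of "ft x"] abs_Im_le_cmod[of "ft x"] by linarith+
  have lb: "-2 \<le> ftR x" "-2 \<le> ftI x" "ftR x \<le> 2" "ftI x \<le> 2" for x using ftRb[of x] by linarith+
  have ftRi: "integrable M ftR" "integrable M ftI"
    using ftRb by (intro int_AEbdd[OF PM, where C=2]; simp)+
  define hR where "hR = real_cond_exp M A ftR"
  define hI where "hI = real_cond_exp M A ftI"
  have hRA[measurable]: "hR \<in> borel_measurable A" "hI \<in> borel_measurable A" unfolding hR_def hI_def by simp_all
  have hRM[measurable]: "hR \<in> borel_measurable M" "hI \<in> borel_measurable M" unfolding hR_def hI_def by simp_all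
  have h_eq: "h = (\<lambda>x. complex_of_real (hR x) + \<i> * complex_of_real (hI x))"
    unfolding h_def cond_exp_c_def hR_def hI_def ftR_def ftI_def by simp
  have Reh[simp]: "Re (h x) = hR x" "Im (h x) = hI x" for x unfolding h_eq by simp_all
  have hm[measurable]: "h \<in> borel_measurable M" unfolding h_eq by measurable
  have hRb: "AE x in M. \<bar>hR x\<bar> \<le> 2" "AE x in M. \<bar>hI x\<bar> \<le> 2"
  proof -
    have "AE x in M. hR x \<le> 2" unfolding hR_def by (intro SA.real_cond_exp_le_c[OF ftRi(1)]) (simp_all add: lb)
    moreover have "AE x in M. hR x \<ge> -2" unfolding hR_def by (intro SA.real_cond_exp_ge_c[OF ftRi(1)]) (simp_all add: lb)
    ultimately show "AE x in M. \<bar>hR x\<bar> \<le> 2" by eventually_elim auto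
    have "AE x in M. hI x \<le> 2" unfolding hI_def by (intro SA.real_cond_exp_le_c[OF ftRi(2)]) (simp_all add: lb)
    moreover have "AE x in M. hI x \<ge> -2" unfolding hI_def by (intro SA.real_cond_exp_ge_c[OF ftRi(2)]) (simp_all add: lb)
    ultimately show "AE x in M. \<bar>hI x\<bar> \<le> 2" by eventually_elim auto
  qed
  have four: "(0::real) \<le> 4" and two: "(0::real) \<le> 2" by simp_all
  have hb: "AE x in M. cmod (h x) \<le> 4" using hRb(1) hRb(2)
  proof eventually_elim
    fix x assume "\<bar>hR x\<bar> \<le> 2" "\<bar>hI x\<bar> \<le> 2"
    then show "cmod (h x) \<le> 4" using cmod_le[of "h x"] by simp
  qed
  have hi: "integrable M h" using hb by (intro int_AEbdd[OF PM hm, where C=4]) simp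
  have ftbAE: "AE x in M. cmod (ft x) \<le> 2" using ftb by simp
  have fmM[measurable]: "f m \<in> borel_measurable M" and fmb: "AE x in M. cmod (f m x) \<le> 1"
    using fbd m by (auto simp: one_bounded_def)
  have fmi: "integrable M (f m)" using fmb by (intro int_AEbdd[OF PM fmM, where C=1]) simp
  have fRA: "(\<lambda>x. Re (f m x)) \<in> borel_measurable A" "(\<lambda>x. Im (f m x)) \<in> borel_measurable A"
    using fm by measurable
  have fRb: "AE x in M. \<bar>Re (f m x)\<bar> \<le> 1 \<and> \<bar>Im (f m x)\<bar> \<le> 1" using fmb
    by eventually_elim (auto intro: order_trans[OF abs_Re_le_cmod] order_trans[OF abs_Im_le_cmod])
  have fRM: "(\<lambda>x. Re (f m x)) \<in> borel_measurable M" "(\<lambda>x. Im (f m x)) \<in> borel_measurable M"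
    using measurable_from_subalg[OF sub fRA(1)] measurable_from_subalg[OF sub fRA(2)] by auto
  have fRb1: "AE x in M. \<bar>Re (f m x)\<bar> \<le> 1" "AE x in M. \<bar>Im (f m x)\<bar> \<le> 1" using fRb by (auto elim: AE_mp)
  have ftRAE: "AE x in M. \<bar>ftR x\<bar> \<le> 2" "AE x in M. \<bar>ftI x\<bar> \<le> 2" by (simp_all add: ftRb)
  have prodb: "\<bar>u * v\<bar> \<le> C" if "\<bar>u\<bar> \<le> C" "\<bar>v\<bar> \<le> 1" for u v C :: real
  proof -
    have "\<bar>u\<bar> * \<bar>v\<bar> \<le> C * 1" using that by (intro mult_mono) auto
    then show ?thesis by (simp add: abs_mult)
  qed
  have ce1: "(\<integral>x. hR x * Re (f m x) \<partial>M) = (\<integral>x. ftR x * Re (f m x) \<partial>M)"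
  proof -
    have i: "integrable M (\<lambda>x. Re (f m x) * ftR x)"
      by (rule int_AEbdd[OF PM borel_measurable_times[OF fRM(1) ftRm(1)] AE_mul_real[OF fRb1(1) ftRAE(1)]])
    have "(\<integral>x. Re (f m x) * hR x \<partial>M) = (\<integral>x. Re (f m x) * ftR x \<partial>M)"
      unfolding hR_def by (rule SA.real_cond_exp_intg(2)[OF i fRA(1) ftRm(1)])
    then show ?thesis by (simp add: mult.commute)
  qed
  have ce2: "(\<integral>x. hI x * Im (f m x) \<partial>M) = (\<integral>x. ftI x * Im (f m x) \<partial>M)"
  proof -
    have i: "integrable M (\<lambda>x. Im (f m x) * ftI x)"
      by (rule int_AEbdd[OF PM borel_measurable_times[OF fRM(2) ftRm(2)] AE_mul_real[OF fRb1(2) ftRAE(2)]])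
    have "(\<integral>x. Im (f m x) * hI x \<partial>M) = (\<integral>x. Im (f m x) * ftI x \<partial>M)"
      unfolding hI_def by (rule SA.real_cond_exp_intg(2)[OF i fRA(2) ftRm(2)])
    then show ?thesis by (simp add: mult.commute)
  qed
  have Re1: "Re (\<integral>x. h x * cnj (f m x) \<partial>M) = Re (\<integral>x. ft x * cnj (f m x) \<partial>M)"
    unfolding split_int(2)[OF fmi hm hb four] split_int(2)[OF fmi ftm ftbAE two]
    using ce1 ce2 by (simp add: ftR_def ftI_def)
  have ce3: "(\<integral>x. hR x * hR x \<partial>M) = (\<integral>x. ftR x * hR x \<partial>M)"
  proof -
    have i: "integrable M (\<lambda>x. hR x * ftR x)"
      by (rule int_AEbdd[OF PM borel_measurable_times[OF hRM(1) ftRm(1)] AE_mul_real[OF hRb(1) ftRAE(1)]])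
    have "(\<integral>x. hR x * hR x \<partial>M) = (\<integral>x. hR x * ftR x \<partial>M)"
      unfolding hR_def[symmetric] using SA.real_cond_exp_intg(2)[OF i[unfolded hR_def] _ ftRm(1)] hRA(1) unfolding hR_def by simp
    then show ?thesis by (simp add: mult.commute)
  qed
  have ce4: "(\<integral>x. hI x * hI x \<partial>M) = (\<integral>x. ftI x * hI x \<partial>M)"
  proof -
    have i: "integrable M (\<lambda>x. hI x * ftI x)"
      by (rule int_AEbdd[OF PM borel_measurable_times[OF hRM(2) ftRm(2)] AE_mul_real[OF hRb(2) ftRAE(2)]])
    have "(\<integral>x. hI x * hI x \<partial>M) = (\<integral>x. hI x * ftI x \<partial>M)"
      unfolding hI_def[symmetric] using SA.real_cond_exp_intg(2)[OF i[unfolded hI_def] _ ftRm(2)] hRA(2) unfolding hI_def by simp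
    then show ?thesis by (simp add: mult.commute)
  qed
  have hsq: "(\<integral>x. (cmod (h x))\<^sup>2 \<partial>M) = (\<integral>x. hR x * hR x \<partial>M) + (\<integral>x. hI x * hI x \<partial>M)"
  proof -
    have i1: "integrable M (\<lambda>x. hR x * hR x)"
      by (rule int_AEbdd[OF PM borel_measurable_times[OF hRM(1) hRM(1)] AE_mul_real[OF hRb(1) hRb(1)]])
    have i2: "integrable M (\<lambda>x. hI x * hI x)"
      by (rule int_AEbdd[OF PM borel_measurable_times[OF hRM(2) hRM(2)] AE_mul_real[OF hRb(2) hRb(2)]])
    have pt: "(cmod (h x))\<^sup>2 = hR x * hR x + hI x * hI x" for x
      using cmod_power2[of "h x"] by (simp add: power2_eq_square)
    have "(\<lambda>x. (cmod (h x))\<^sup>2) = (\<lambda>x. hR x * hR x + hI x * hI x)" using pt by auto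
    then show ?thesis using i1 i2 by simp
  qed
  have Re2: "Re (\<integral>x. ft x * cnj (h x) \<partial>M) = (\<integral>x. (cmod (h x))\<^sup>2 \<partial>M)"
    unfolding split_int(2)[OF hi ftm ftbAE two] hsq ce3 ce4 by (simp add: ftR_def ftI_def)
  have L2sq: "(L2norm M u)\<^sup>2 = (\<integral>x. (cmod (u x))\<^sup>2 \<partial>M)" for u
    unfolding L2norm_def by (simp add: integral_nonneg_AE)
  have Pn_split: "Pn n x = f m (tpow (T m) (a m n) x) * (\<Prod>j\<in>{1..l}-{m}. f j (tpow (T j) (a j n) x))" for n x
    unfolding Pn_def using prod.remove[OF finite_atLeastAtMost[of 1 l] m, of "\<lambda>j. f j (tpow (T j) (a j n) x)"] by simp
  have keyf: "(\<integral>x. D (r k) x * cnj (f m x) \<partial>M) = complex_of_real ((L2norm M (g k))\<^sup>2)" for k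
  proof -
    have "(\<integral>x. D (r k) x * cnj (f m x) \<partial>M) = cnj (\<integral>x. avg (N0 (r k)) (\<lambda>n x. f m (tpow (T m) (a m n) x) *
                    (\<Prod>j\<in>{1..l}-{m}. f j (tpow (T j) (a j n) x))) x * cnj (FN (N0 (r k)) x) \<partial>M)"
      unfolding D_def by (rule key[OF sys m fbd FNm FNb fmM fmb zero_le_one])
    also have "avg (N0 (r k)) (\<lambda>n x. f m (tpow (T m) (a m n) x) * (\<Prod>j\<in>{1..l}-{m}. f j (tpow (T j) (a j n) x)))
        = FN (N0 (r k))" unfolding FN_def Pn_split[abs_def] ..
    also have "(\<lambda>x. FN (N0 (r k)) x * cnj (FN (N0 (r k)) x)) = (\<lambda>x. complex_of_real ((cmod (FN (N0 (r k)) x))\<^sup>2))"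
      by (rule ext) (rule complex_norm_square[symmetric])
    finally show ?thesis by (simp add: L2sq g_def del: of_real_power)
  qed
  have r1: "1 / (real (r k) + 1) \<le> 1 / (real k + 1)" for k using rk[of k] by (simp add: frac_le)
  have lb: "(max 0 (\<delta> - 1 / (real k + 1)))\<^sup>2 \<le> Re (\<integral>x. D (r k) x * cnj (f m x) \<partial>M)" for k
  proof -
    have "\<delta> - 1 / (real k + 1) \<le> L2norm M (g k)" using N0L[of "r k"] r1[of k] unfolding g_def by linarith
    moreover have "0 \<le> L2norm M (g k)" unfolding L2norm_def by simp
    ultimately have "max 0 (\<delta> - 1 / (real k + 1)) \<le> L2norm M (g k)" by simp
    then have "(max 0 (\<delta> - 1 / (real k + 1)))\<^sup>2 \<le> (L2norm M (g k))\<^sup>2" by (intro power_mono) auto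
    then show ?thesis unfolding keyf by simp
  qed
  have inv0: "(\<lambda>k. 1 / (real k + 1)) \<longlonglongrightarrow> 0"
    using LIMSEQ_Suc[OF lim_1_over_n] by (simp add: add.commute)
  have lblim: "(\<lambda>k. (max 0 (\<delta> - 1 / (real k + 1)))\<^sup>2) \<longlonglongrightarrow> (max 0 (\<delta> - 0))\<^sup>2"
    by (intro tendsto_intros inv0)
  have lim1: "(\<lambda>k. Re (\<integral>x. D (r k) x * cnj (f m x) \<partial>M)) \<longlonglongrightarrow> Re (\<integral>x. ft x * cnj (f m x) \<partial>M)"
    by (rule tendsto_Re[OF conv[OF fmi]])
  have d2: "\<delta>\<^sup>2 \<le> Re (\<integral>x. ft x * cnj (f m x) \<partial>M)"
    using LIMSEQ_le[OF lblim lim1] lb delta by auto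
  have hfi: "integrable M (\<lambda>x. h x * cnj (f m x))" by (rule split_int(1)[OF fmi hm hb four])
  have "Re (\<integral>x. h x * cnj (f m x) \<partial>M) \<le> cmod (\<integral>x. h x * cnj (f m x) \<partial>M)" by (rule complex_Re_le_cmod)
  also have "\<dots> \<le> (\<integral>x. norm (h x * cnj (f m x)) \<partial>M)" by (rule integral_norm_bound)
  also have "\<dots> \<le> (\<integral>x. cmod (h x) \<partial>M)"
  proof (rule integral_mono_AE)
    show "integrable M (\<lambda>x. norm (h x * cnj (f m x)))" using hfi by (rule integrable_norm)
    show "integrable M (\<lambda>x. cmod (h x))" using hi by (rule integrable_norm)
    show "AE x in M. norm (h x * cnj (f m x)) \<le> cmod (h x)" using fmb
      by eventually_elim (simp add: norm_mult mult_left_le)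
  qed
  also have "\<dots> \<le> L2norm M h" by (rule L1_le_L2[OF PM hm hb])
  finally have "\<delta>\<^sup>2 \<le> L2norm M h" using d2 Re1 by simp
  then have d4: "\<delta> ^ 4 \<le> (L2norm M h)\<^sup>2"
    using power_mono[of "\<delta>\<^sup>2" "L2norm M h" 2] delta by (simp add: power_mult[symmetric])
  define G where "G k = avg (Nk k) (\<lambda>n x. h (tpow (T m) (a m n) x) * (\<Prod>j\<in>{1..l}-{m}. f j (tpow (T j) (a j n) x)))" for k
  have Gm: "G k \<in> borel_measurable M" for k unfolding G_def by (rule Gprops(1)[OF sys m fbd hm hb four])
  have Gb: "AE x in M. cmod (G k x) \<le> 4" for k unfolding G_def by (rule Gprops(2)[OF sys m fbd hm hb four])
  have keyh: "(\<integral>x. D (r k) x * cnj (h x) \<partial>M) = cnj (\<integral>x. G k x * cnj (g k x) \<partial>M)" for k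
    unfolding D_def G_def Nk_def g_def by (rule key[OF sys m fbd FNm FNb hm hb four])
  have yk: "Re (\<integral>x. D (r k) x * cnj (h x) \<partial>M) \<le> L2norm M (G k)" for k
  proof -
    have Gi: "integrable M (G k)" using Gb by (intro int_AEbdd[OF PM Gm, where C=4]) simp
    have gm: "g k \<in> borel_measurable M" and gb: "AE x in M. cmod (g k x) \<le> 1" unfolding g_def by (rule FNm, rule FNb)
    have Ggi: "integrable M (\<lambda>x. G k x * cnj (g k x))"
    proof (rule int_AEbdd[OF PM, where C=4])
      show "(\<lambda>x. G k x * cnj (g k x)) \<in> borel_measurable M" by (intro borel_measurable_times borel_measurable_cnj Gm gm)
      show "AE x in M. norm (G k x * cnj (g k x)) \<le> 4" using Gb gb
      proof eventually_elim
        fix x assume a: "cmod (G k x) \<le> 4" and b: "cmod (g k x) \<le> 1"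
        have "cmod (G k x) * cmod (g k x) \<le> 4 * 1" using a b by (intro mult_mono) auto
        then show "norm (G k x * cnj (g k x)) \<le> 4" by (simp add: norm_mult)
      qed
    qed
    have "Re (\<integral>x. D (r k) x * cnj (h x) \<partial>M) = Re (\<integral>x. G k x * cnj (g k x) \<partial>M)" unfolding keyh by simp
    also have "\<dots> \<le> cmod (\<integral>x. G k x * cnj (g k x) \<partial>M)" by (rule complex_Re_le_cmod)
    also have "\<dots> \<le> (\<integral>x. norm (G k x * cnj (g k x)) \<partial>M)" by (rule integral_norm_bound)
    also have "\<dots> \<le> (\<integral>x. cmod (G k x) \<partial>M)"
    proof (rule integral_mono_AE)
      show "integrable M (\<lambda>x. norm (G k x * cnj (g k x)))" using Ggi by (rule integrable_norm)
      show "integrable M (\<lambda>x. cmod (G k x))" using Gi by (rule integrable_norm)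
      show "AE x in M. norm (G k x * cnj (g k x)) \<le> cmod (G k x)" using gb
        by eventually_elim (simp add: norm_mult mult_left_le)
    qed
    also have "\<dots> \<le> L2norm M (G k)" by (rule L1_le_L2[OF PM Gm Gb])
    finally show ?thesis .
  qed
  have ylim: "(\<lambda>k. Re (\<integral>x. D (r k) x * cnj (h x) \<partial>M)) \<longlonglongrightarrow> (L2norm M h)\<^sup>2"
    using tendsto_Re[OF conv[OF hi]] unfolding Re2 L2sq .
  have e1: "limsup (\<lambda>k. ereal (Re (\<integral>x. D (r k) x * cnj (h x) \<partial>M))) = ereal ((L2norm M h)\<^sup>2)"
    by (rule lim_imp_Limsup) (simp_all add: ylim)
  have e2: "limsup (\<lambda>k. ereal (Re (\<integral>x. D (r k) x * cnj (h x) \<partial>M))) \<le> limsup (\<lambda>k. ereal (L2norm M (G k)))"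
    by (rule Limsup_mono) (simp add: yk)
  have limG: "ereal (\<delta> ^ 4) \<le> limsup (\<lambda>k. ereal (L2norm M (G k)))"
  proof -
    have "ereal (\<delta> ^ 4) \<le> ereal ((L2norm M h)\<^sup>2)" using d4 by simp
    also have "\<dots> = limsup (\<lambda>k. ereal (Re (\<integral>x. D (r k) x * cnj (h x) \<partial>M)))" using e1 by simp
    also have "\<dots> \<le> limsup (\<lambda>k. ereal (L2norm M (G k)))" by (rule e2)
    finally show ?thesis .
  qed
  show ?thesis
  proof (intro exI[of _ Nk] exI[of _ g] exI[of _ ft] conjI allI)
    show "filterlim Nk at_top sequentially"
      unfolding filterlim_at_top eventually_sequentially Nk_def
    proof
      fix Z :: nat
      show "\<exists>N. \<forall>n\<ge>N. Z \<le> N0 (r n)"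
      proof (intro exI allI impI)
        fix n assume "Z \<le> n"
        then show "Z \<le> N0 (r n)" using rk[of n] N0k[of "r n"] by linarith
      qed
    qed
    show "one_bounded M (g k)" for k unfolding one_bounded_def g_def using FNm FNb by simp
    show "weak_L2_limit M (\<lambda>k. avg (Nk k) (\<lambda>n x. g k (tpow (T m) (- a m n) x) *
                    (\<Prod>j\<in>{1..l}-{m}. cnj (f j (tpow (T j) (a j n) (tpow (T m) (- a m n) x)))))) ft"
      unfolding weak_L2_limit_def
    proof (intro conjI allI impI)
      show "in_L2 M ft" unfolding in_L2_def
      proof
        show "ft \<in> borel_measurable M" by (rule ftm)
        show "integrable M (\<lambda>x. (cmod (ft x))\<^sup>2)"
        proof (rule int_AEbdd[OF PM, where C=4])
          show "(\<lambda>x. (cmod (ft x))\<^sup>2) \<in> borel_measurable M" by (rule borel_measurable_continuous_on[OF _ ftm]) (intro continuous_intros)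
          show "AE x in M. norm ((cmod (ft x))\<^sup>2) \<le> 4" using ftb power_mono[of "cmod (ft _)" 2 2] by (auto intro!: AE_I2)
        qed
      qed
      fix h' assume "in_L2 M h'"
      then have "integrable M h'" by (rule L2_int[OF PM])
      from conv[OF this] show "(\<lambda>k. \<integral>x. avg (Nk k) (\<lambda>n x. g k (tpow (T m) (- a m n) x) *
                    (\<Prod>j\<in>{1..l}-{m}. cnj (f j (tpow (T j) (a j n) (tpow (T m) (- a m n) x))))) x * cnj (h' x) \<partial>M)
             \<longlonglongrightarrow> (\<integral>x. ft x * cnj (h' x) \<partial>M)"
        unfolding D_def Nk_def g_def .
    qed
    show "ereal (\<delta> ^ 4) \<le> limsup (\<lambda>k. ereal (L2norm M
               (avg (Nk k) (\<lambda>n x. cond_exp_c M A ft (tpow (T m) (a m n) x) *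
                    (\<Prod>j\<in>{1..l}-{m}. f j (tpow (T j) (a j n) x))))))"
      using limG unfolding G_def h_def .
  qed
qed

end
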